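(* Let $E,F\subset\mathbb{C}$ be compact and $K=E\times F\subset\mathbb{C}^2$. Let $a,b>0$ and let $C=T_{a,b}$ be the triangle with vertices $(0,0),(b,0),(0,a)$. Then $$-\log\delta_C(K)=\frac{ab}{a+b}\Big(\frac{-\log D(E)}{a}+\frac{-\log D(F)}{b}\Big),\quad\text{i.e.}\quad \delta_C(K)=D(E)^{b/(a+b)}D(F)^{a/(a+b)},$$ where $D(E),D(F)$ denote the univariate transfinite diameters (logarithmic capacities) of $E,F$.
   Context: For a convex body $C\subset(\mathbb{R}^+)^2$ and $n\ge1$, $\mathrm{Poly}(nC)$ is the span of the monomials $z^J$, $J\in nC\cap\mathbb{N}^2$, with dimension $d_n$ and monomials $z^{\alpha(j)}$, $j=1,\dots,d_n$. Let $V_n(K)=\max_{\zeta_1,\dots,\zeta_{d_n}\in K}|\det[\zeta_j^{\alpha(i)}]_{i,j=1}^{d_n}|$ and $l_n=\sum_{j=1}^{d_n}|\alpha(j)|$. The $C$-transfinite diameter is $\delta_C(K)=\limsup_n V_n(K)^{1/l_n}$ (known to be a limit). *)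

theory Defs
  imports "HOL-Analysis.Analysis"
begin

definition det_on :: "'i set \<Rightarrow> ('i \<Rightarrow> 'i \<Rightarrow> complex) \<Rightarrow> complex" where
  "det_on A M = (\<Sum>p\<in>{p. p permutes A}. of_int (sign p) * (\<Prod>i\<in>A. M i (p i)))"

definition exps :: "(real \<times> real) set \<Rightarrow> nat \<Rightarrow> (nat \<times> nat) set" where
  "exps C n = {J. (real (fst J), real (snd J)) \<in> (\<lambda>x. real n *\<^sub>R x) ` C}"

definition mono2 :: "nat \<times> nat \<Rightarrow> complex \<times> complex \<Rightarrow> complex" where
  "mono2 J z = fst z ^ fst J * snd z ^ snd J"

text \<open>V_n(K): maximal modulus of the Vandermonde determinant with points in K
  (points indexed by the multi-indices; sup with 0 only matters for empty K).\<close>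
definition Vn :: "(real \<times> real) set \<Rightarrow> (complex \<times> complex) set \<Rightarrow> nat \<Rightarrow> real" where
  "Vn C K n = Sup (insert 0 {cmod (det_on (exps C n) (\<lambda>I J. mono2 I (\<zeta> J))) | \<zeta>.
       \<forall>J\<in>exps C n. \<zeta> J \<in> K})"

definition ln_sum :: "(real \<times> real) set \<Rightarrow> nat \<Rightarrow> nat" where
  "ln_sum C n = (\<Sum>J\<in>exps C n. fst J + snd J)"

definition delta_C :: "(real \<times> real) set \<Rightarrow> (complex \<times> complex) set \<Rightarrow> real" where
  "delta_C C K = real_of_ereal (limsup (\<lambda>n. ereal (Vn C K n powr (1 / real (ln_sum C n)))))"

definition fekete_V :: "complex set \<Rightarrow> nat \<Rightarrow> real" where
  "fekete_V E n = Sup (insert 0 {(\<Prod>i<n. \<Prod>j\<in>{i<..<n}. cmod (z i - z j)) | z.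
       \<forall>i<n. z i \<in> E})"

definition transfinite_diameter :: "complex set \<Rightarrow> real" where
  "transfinite_diameter E =
     real_of_ereal (limsup (\<lambda>n. ereal (fekete_V E n powr (2 / (real n * (real n - 1))))))"

definition triangle :: "real \<Rightarrow> real \<Rightarrow> (real \<times> real) set" where
  "triangle a b = convex hull {(0,0), (b,0), (0,a)}"

end

theory Submission
  imports Defs "HOL-Combinatorics.Permutations" "HOL-Computational_Algebra.Polynomial" "HOL-Real_Asymp.Real_Asymp"
begin

lemma det_on_two_rows:
  assumes fin: "finite A" and r: "r \<in> A" and s: "s \<in> A" and rs: "r \<noteq> s"
    and eq: "\<And>J. M r J = M s J"
  shows "det_on A M = 0"
proof -
  let ?t = "Transposition.transpose r s"
  have tp: "?t permutes A" using r s by (rule permutes_swap_id)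
  let ?f = "\<lambda>p. of_int (sign p) * (\<Prod>i\<in>A. M i (p i))"
  have "det_on A M = sum ?f {p. p permutes A}" unfolding det_on_def by simp
  also have "\<dots> = sum (\<lambda>p. ?f (p \<circ> ?t)) {p. p permutes A}"
    by (rule sum_permutations_compose_right[OF tp])
  also have "\<dots> = sum (\<lambda>p. - ?f p) {p. p permutes A}"
  proof (rule sum.cong[OF refl])
    fix p assume p: "p \<in> {p. p permutes A}"
    hence pp: "permutation p" using fin permutation_permutes by blast
    have "sign (p \<circ> ?t) = - sign p"
      by (simp add: sign_compose[OF pp permutation_swap_id] sign_swap_id rs)
    moreover have "(\<Prod>i\<in>A. M i ((p \<circ> ?t) i)) = (\<Prod>i\<in>A. M i (p i))"
    proof -
      have "(\<Prod>i\<in>A. M i ((p \<circ> ?t) i)) = (\<Prod>i\<in>A. M (?t i) (p (?t i)))"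
      proof (rule prod.cong[OF refl])
        fix x have "M (?t x) = M x" using eq by (cases "x = r"; cases "x = s") (auto simp: fun_eq_iff)
        thus "M x ((p \<circ> ?t) x) = M (?t x) (p (?t x))" by simp
      qed
      also have "\<dots> = (\<Prod>i\<in>?t ` A. M i (p i))"
        using prod.reindex[of ?t A "\<lambda>i. M i (p i)"] by (simp add: o_def)
      also have "?t ` A = A" using permutes_image[OF tp] .
      finally show ?thesis .
    qed
    ultimately show "?f (p \<circ> ?t) = - ?f p" by simp
  qed
  also have "\<dots> = - det_on A M" unfolding det_on_def by (simp add: sum_negf)
  finally show ?thesis by simp
qed

lemma bij_rank_id:
  fixes rk :: "'i \<Rightarrow> int"
  assumes fin: "finite A" and g: "bij_betw g A A"
    and h: "\<And>I. I \<in> A \<Longrightarrow> g I \<noteq> I \<Longrightarrow> rk (g I) < rk I"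
  shows "\<forall>I\<in>A. g I = I"
proof (rule ccontr)
  assume "\<not> (\<forall>I\<in>A. g I = I)"
  then obtain I0 where I0: "I0 \<in> A" "g I0 \<noteq> I0" by blast
  have "sum (rk \<circ> g) A = sum rk A" using sum.reindex_bij_betw[OF g, of rk] by (simp add: o_def)
  moreover have "sum (rk \<circ> g) A < sum rk A"
    by (rule sum_strict_mono_ex1[OF fin]) (use h I0 in \<open>fastforce+\<close>)
  ultimately show False by simp
qed

lemma bij_rank_id':
  fixes rk :: "'i \<Rightarrow> int"
  assumes fin: "finite A" and g: "bij_betw g A A"
    and h: "\<And>I. I \<in> A \<Longrightarrow> g I \<noteq> I \<Longrightarrow> rk I < rk (g I)"
  shows "\<forall>I\<in>A. g I = I"
  using bij_rank_id[OF fin g, of "\<lambda>I. - rk I"] h by force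

lemma det_on_triangular:
  fixes rk :: "'i \<Rightarrow> int"
  assumes fin: "finite A"
    and h: "\<And>I J. I \<in> A \<Longrightarrow> J \<in> A \<Longrightarrow> M I J \<noteq> 0 \<Longrightarrow> I \<noteq> J \<Longrightarrow> rk I < rk J"
  shows "det_on A M = (\<Prod>I\<in>A. M I I)"
proof -
  let ?f = "\<lambda>p. of_int (sign p) * (\<Prod>i\<in>A. M i (p i))"
  have idp: "id \<in> {p. p permutes A}" by (simp add: permutes_id)
  have z: "?f p = 0" if p: "p \<in> {p. p permutes A} - {id}" for p
  proof (rule ccontr)
    assume nz: "?f p \<noteq> 0"
    hence nz2: "\<And>I. I \<in> A \<Longrightarrow> M I (p I) \<noteq> 0" using fin by auto
    have pA: "p permutes A" using p by simp
    have "\<forall>I\<in>A. p I = I"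
      by (rule bij_rank_id'[OF fin permutes_imp_bij[OF pA], of rk])
         (metis h nz2 permutes_in_image[OF pA])
    hence "p = id" using pA by (metis eq_id_iff permutes_not_in)
    thus False using p by simp
  qed
  have "det_on A M = sum ?f {p. p permutes A}" unfolding det_on_def by simp
  also have "\<dots> = ?f id + sum ?f ({p. p permutes A} - {id})"
    by (rule sum.remove[OF finite_permutations[OF fin] idp])
  also have "sum ?f ({p. p permutes A} - {id}) = 0" by (rule sum.neutral) (use z in blast)
  finally show ?thesis by simp
qed

lemma det_on_unitri:
  fixes rk :: "'i \<Rightarrow> int"
  assumes fin: "finite A"
    and diag: "\<And>I. I \<in> A \<Longrightarrow> U I I = 1"
    and h: "\<And>I K. I \<in> A \<Longrightarrow> K \<in> A \<Longrightarrow> U I K \<noteq> 0 \<Longrightarrow> K \<noteq> I \<Longrightarrow> rk K < rk I"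
  shows "det_on A (\<lambda>I J. \<Sum>K\<in>A. U I K * M K J) = det_on A M"
proof -
  let ?P = "{p. p permutes A}"
  let ?G = "PiE A (\<lambda>_. A)"
  let ?F = "\<lambda>g. (\<Prod>I\<in>A. U I (g I)) * det_on A (\<lambda>I. M (g I))"
  define g0 where "g0 = restrict (\<lambda>I. I) A"
  have g0G: "g0 \<in> ?G" unfolding g0_def by auto
  have "det_on A (\<lambda>I J. \<Sum>K\<in>A. U I K * M K J)
      = (\<Sum>p\<in>?P. of_int (sign p) * (\<Sum>g\<in>?G. \<Prod>I\<in>A. U I (g I) * M (g I) (p I)))"
    unfolding det_on_def apply (rule sum.cong[OF refl]) apply (subst prod_sum_PiE) using fin by auto
  also have "\<dots> = (\<Sum>p\<in>?P. \<Sum>g\<in>?G. (\<Prod>I\<in>A. U I (g I)) * (of_int (sign p) * (\<Prod>I\<in>A. M (g I) (p I))))"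
    apply (rule sum.cong[OF refl]) apply (subst sum_distrib_left) apply (rule sum.cong[OF refl])
    by (simp add: prod.distrib mult.left_commute)
  also have "\<dots> = (\<Sum>g\<in>?G. \<Sum>p\<in>?P. (\<Prod>I\<in>A. U I (g I)) * (of_int (sign p) * (\<Prod>I\<in>A. M (g I) (p I))))"
    by (rule sum.swap)
  also have "\<dots> = (\<Sum>g\<in>?G. ?F g)"
    unfolding det_on_def by (simp add: sum_distrib_left)
  also have "\<dots> = ?F g0 + (\<Sum>g\<in>?G - {g0}. ?F g)"
    by (rule sum.remove[OF finite_PiE[OF fin] g0G]) (use fin in auto)
  also have "(\<Sum>g\<in>?G - {g0}. ?F g) = 0"
  proof (rule sum.neutral, rule ballI)
    fix g assume gG: "g \<in> ?G - {g0}"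
    show "?F g = 0"
    proof (cases "inj_on g A")
      case False
      then obtain r s where rs: "r \<in> A" "s \<in> A" "r \<noteq> s" "g r = g s"
        unfolding inj_on_def by blast
      have "det_on A (\<lambda>I. M (g I)) = 0"
        by (rule det_on_two_rows[OF fin rs(1,2,3)]) (simp add: rs(4))
      thus ?thesis by simp
    next
      case True
      have gA: "g ` A \<subseteq> A" using gG by auto
      have bij: "bij_betw g A A"
        using True gA by (simp add: bij_betw_def fin endo_inj_surj)
      show ?thesis
      proof (rule ccontr)
        assume "?F g \<noteq> 0"
        hence nz: "\<And>I. I \<in> A \<Longrightarrow> U I (g I) \<noteq> 0" using fin by auto
        have "\<forall>I\<in>A. g I = I"
        proof (rule bij_rank_id[OF fin bij, of rk])
          fix I assume I: "I \<in> A" "g I \<noteq> I"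
          have "g I \<in> A" using gA I by blast
          thus "rk (g I) < rk I" using h[OF I(1) _ nz[OF I(1)] I(2)] by blast
        qed
        hence "g = g0" using gG unfolding g0_def by (auto simp: PiE_def extensional_def fun_eq_iff)
        thus False using gG by simp
      qed
    qed
  qed
  also have "?F g0 = det_on A M"
    unfolding g0_def det_on_def using diag by (simp add: restrict_def)
  finally show ?thesis by simp
qed

lemma det_on_bound:
  assumes fin: "finite A" and b: "\<And>I J. I \<in> A \<Longrightarrow> J \<in> A \<Longrightarrow> cmod (M I J) \<le> B I"
  shows "cmod (det_on A M) \<le> fact (card A) * (\<Prod>I\<in>A. B I)"
proof -
  have "cmod (det_on A M) \<le> (\<Sum>p\<in>{p. p permutes A}. cmod (of_int (sign p) * (\<Prod>i\<in>A. M i (p i))))"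
    unfolding det_on_def by (rule norm_sum)
  also have "\<dots> \<le> (\<Sum>p\<in>{p. p permutes A}. \<Prod>I\<in>A. B I)"
  proof (rule sum_mono)
    fix p assume "p \<in> {p. p permutes A}"
    hence p: "p permutes A" by simp
    have "cmod (of_int (sign p) * (\<Prod>i\<in>A. M i (p i))) = (\<Prod>i\<in>A. cmod (M i (p i)))"
      by (cases rule: sign_cases[of p]) (simp_all add: norm_mult prod_norm)
    also have "\<dots> \<le> (\<Prod>I\<in>A. B I)"
      by (rule prod_mono) (use b permutes_in_image[OF p] in auto)
    finally show "cmod (of_int (sign p) * (\<Prod>i\<in>A. M i (p i))) \<le> (\<Prod>I\<in>A. B I)" .
  qed
  also have "\<dots> = fact (card A) * (\<Prod>I\<in>A. B I)"
    by (simp add: card_permutations[OF refl fin])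
  finally show ?thesis .
qed


lemma det_on_cong:
  assumes fin: "finite A" and h: "\<And>I J. I \<in> A \<Longrightarrow> J \<in> A \<Longrightarrow> M I J = M' I J"
  shows "det_on A M = det_on A M'"
  unfolding det_on_def
proof (rule sum.cong[OF refl])
  fix p assume "p \<in> {p. p permutes A}"
  hence p: "p permutes A" by simp
  show "of_int (sign p) * (\<Prod>i\<in>A. M i (p i)) = of_int (sign p) * (\<Prod>i\<in>A. M' i (p i))"
    using h permutes_in_image[OF p] by (metis (no_types, lifting) prod.cong)
qed

lemma poly_as_sum:
  fixes p :: "complex poly"
  assumes "degree p < N"
  shows "poly p z = (\<Sum>i<N. coeff p i * z ^ i)"
  unfolding poly_altdef
  by (rule sum.mono_neutral_left) (use assms in \<open>auto intro: le_degree\<close>)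

definition newt :: "(nat \<Rightarrow> complex) \<Rightarrow> nat \<Rightarrow> complex poly" where
  "newt x j = (\<Prod>l<j. [:- x l, 1:])"

lemma newt_degree: "degree (newt x j) = j"
proof -
  have "degree (newt x j) = (\<Sum>l<j. degree [:- x l, 1:])"
    unfolding newt_def by (rule degree_prod_sum_eq) auto
  thus ?thesis by simp
qed

lemma newt_lead: "lead_coeff (newt x j) = 1"
  unfolding newt_def lead_coeff_prod by simp

lemma poly_newt: "poly (newt x j) z = (\<Prod>l<j. z - x l)"
  unfolding newt_def poly_prod by simp

lemma det_poly_vander:
  fixes P :: "nat \<Rightarrow> complex poly" and x :: "nat \<Rightarrow> complex"
  assumes mon: "\<And>j. j < N \<Longrightarrow> degree (P j) = j \<and> lead_coeff (P j) = 1"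
  shows "det_on {..<N} (\<lambda>j k. poly (P j) (x k)) = det_on {..<N} (\<lambda>j k. x k ^ j)"
proof -
  have "det_on {..<N} (\<lambda>j k. poly (P j) (x k)) =
        det_on {..<N} (\<lambda>j k. \<Sum>i\<in>{..<N}. coeff (P j) i * x k ^ i)"
    by (rule det_on_cong) (use mon poly_as_sum in auto)
  also have "\<dots> = det_on {..<N} (\<lambda>j k. x k ^ j)"
  proof (rule det_on_unitri[where rk=int])
    fix I assume "I \<in> {..<N}" thus "coeff (P I) I = 1" using mon by fastforce
  next
    fix I K assume "I \<in> {..<N}" "K \<in> {..<N}" "coeff (P I) K \<noteq> 0" "K \<noteq> I"
    thus "int K < int I" using mon[of I] coeff_eq_0[of "P I" K] by fastforce
  qed simp
  finally show ?thesis .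
qed

lemma prod_triangle_swap:
  fixes f :: "nat \<Rightarrow> nat \<Rightarrow> real"
  shows "(\<Prod>i<N. \<Prod>j\<in>{i<..<N}. f i j) = (\<Prod>j<N. \<Prod>i<j. f i j)"
proof (induction N)
  case 0 show ?case by simp
next
  case (Suc N)
  have "(\<Prod>i<Suc N. \<Prod>j\<in>{i<..<Suc N}. f i j) = (\<Prod>i<N. (\<Prod>j\<in>{i<..<N}. f i j) * f i N)"
  proof -
    have "(\<Prod>i<Suc N. \<Prod>j\<in>{i<..<Suc N}. f i j) = (\<Prod>i<N. \<Prod>j\<in>{i<..<Suc N}. f i j)"
    proof -
      have "{N<..<Suc N} = {}" by auto
      thus ?thesis by (simp add: lessThan_Suc)
    qed
    also have "\<dots> = (\<Prod>i<N. (\<Prod>j\<in>{i<..<N}. f i j) * f i N)"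
    proof (rule prod.cong[OF refl])
      fix i assume "i \<in> {..<N}"
      hence "{i<..<Suc N} = insert N {i<..<N}" by auto
      thus "(\<Prod>j\<in>{i<..<Suc N}. f i j) = (\<Prod>j\<in>{i<..<N}. f i j) * f i N" by (simp add: mult.commute)
    qed
    finally show ?thesis .
  qed
  also have "\<dots> = (\<Prod>j<N. \<Prod>i<j. f i j) * (\<Prod>i<N. f i N)"
    by (simp add: prod.distrib Suc.IH)
  also have "\<dots> = (\<Prod>j<Suc N. \<Prod>i<j. f i j)" by simp
  finally show ?case .
qed

lemma vander_abs:
  fixes x :: "nat \<Rightarrow> complex"
  shows "cmod (det_on {..<N} (\<lambda>j k. x k ^ j)) = (\<Prod>i<N. \<Prod>j\<in>{i<..<N}. cmod (x i - x j))"
proof -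
  have "det_on {..<N} (\<lambda>j k. x k ^ j) = det_on {..<N} (\<lambda>j k. poly (newt x j) (x k))"
    by (rule det_poly_vander[symmetric]) (metis newt_degree newt_lead)
  also have "\<dots> = (\<Prod>j<N. poly (newt x j) (x j))"
  proof (rule det_on_triangular[where rk=int])
    fix I J assume "I \<in> {..<N}" "J \<in> {..<N}" "poly (newt x I) (x J) \<noteq> 0" "I \<noteq> J"
    thus "int I < int J" unfolding poly_newt by (cases "J < I") auto
  qed simp
  finally have "cmod (det_on {..<N} (\<lambda>j k. x k ^ j)) = (\<Prod>j<N. \<Prod>i<j. cmod (x i - x j))"
    by (simp add: poly_newt prod_norm[symmetric] norm_minus_commute)
  also have "\<dots> = (\<Prod>i<N. \<Prod>j\<in>{i<..<N}. cmod (x i - x j))"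
    by (rule prod_triangle_swap[symmetric])
  finally show ?thesis .
qed


definition fprod :: "(nat \<Rightarrow> complex) \<Rightarrow> nat \<Rightarrow> real" where
  "fprod z n = (\<Prod>i<n. \<Prod>j\<in>{i<..<n}. cmod (z i - z j))"

definition dseq :: "complex set \<Rightarrow> nat \<Rightarrow> real" where
  "dseq E n = fekete_V E n powr (2 / (real n * (real n - 1)))"

definition cfg :: "complex set \<Rightarrow> nat \<Rightarrow> (nat \<Rightarrow> complex) set" where
  "cfg E n = {z. \<forall>i<n. z i \<in> E}"

lemma fekete_V_alt: "fekete_V E n = Sup (insert 0 ((\<lambda>z. fprod z n) ` cfg E n))"
  unfolding fekete_V_def fprod_def cfg_def by (rule arg_cong[where f=Sup]) auto

lemma TD_alt: "transfinite_diameter E = real_of_ereal (limsup (\<lambda>n. ereal (dseq E n)))"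
  unfolding transfinite_diameter_def dseq_def ..

lemma fprod_nonneg: "0 \<le> fprod z n" by (simp add: fprod_def prod_nonneg)

lemma pairs_count: "2 * (\<Sum>i<n. card {i<..<n}) = n * (n - 1)"
proof (induction n)
  case 0 show ?case by simp
next
  case (Suc n)
  have "(\<Sum>i<Suc n. card {i<..<Suc n}) = (\<Sum>i<n. n - i)" by simp
  also have "\<dots> = (\<Sum>i<n. (n - Suc i) + 1)" by (rule sum.cong) auto
  also have "\<dots> = (\<Sum>i<n. card {i<..<n}) + n" by (subst sum.distrib) simp
  finally have "2 * (\<Sum>i<Suc n. card {i<..<Suc n}) = n * (n - 1) + 2 * n" using Suc.IH by simp
  also have "\<dots> = Suc n * (Suc n - 1)" by (cases n) (auto simp: algebra_simps)
  finally show ?case .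
qed

definition npairs :: "nat \<Rightarrow> nat" where "npairs n = (\<Sum>i<n. card {i<..<n})"

lemma fprod_le:
  assumes z: "z \<in> cfg E n" and B: "\<And>u v. u \<in> E \<Longrightarrow> v \<in> E \<Longrightarrow> cmod (u - v) \<le> B" and B0: "0 \<le> B"
  shows "fprod z n \<le> B ^ npairs n"
  unfolding fprod_def npairs_def power_sum
proof (rule prod_mono)
  fix i assume i: "i \<in> {..<n}"
  have "(\<Prod>j\<in>{i<..<n}. cmod (z i - z j)) \<le> (\<Prod>j\<in>{i<..<n}. B)"
    by (rule prod_mono) (use z B i in \<open>auto simp: cfg_def\<close>)
  thus "0 \<le> (\<Prod>j\<in>{i<..<n}. cmod (z i - z j)) \<and> (\<Prod>j\<in>{i<..<n}. cmod (z i - z j)) \<le> B ^ card {i<..<n}"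
    by (simp add: prod_nonneg)
qed

locale cset =
  fixes E :: "complex set"
  assumes cpt: "compact E" and ne: "E \<noteq> {}"
begin

definition B where "B = (SOME B. 1 \<le> B \<and> (\<forall>u\<in>E. \<forall>v\<in>E. cmod (u - v) \<le> B) \<and> (\<forall>u\<in>E. cmod u \<le> B))"

lemma B_prop: "1 \<le> B \<and> (\<forall>u\<in>E. \<forall>v\<in>E. cmod (u - v) \<le> B) \<and> (\<forall>u\<in>E. cmod u \<le> B)"
proof -
  obtain r where r: "\<forall>x\<in>E. norm x \<le> r" using compact_imp_bounded[OF cpt] bounded_iff by blast
  have "1 \<le> max 1 (2*r) \<and> (\<forall>u\<in>E. \<forall>v\<in>E. cmod (u - v) \<le> max 1 (2*r)) \<and> (\<forall>u\<in>E. cmod u \<le> max 1 (2*r))"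
  proof (intro conjI ballI)
    fix u v assume "u \<in> E" "v \<in> E"
    hence "cmod (u - v) \<le> r + r" using r norm_triangle_ineq4[of u v] by (meson add_mono order_trans)
    thus "cmod (u - v) \<le> max 1 (2*r)" by simp
  next
    fix u assume "u \<in> E" thus "cmod u \<le> max 1 (2*r)" using r ne by fastforce
  qed simp
  thus ?thesis unfolding B_def by (rule someI)
qed

lemma B1: "1 \<le> B" and Bd: "u \<in> E \<Longrightarrow> v \<in> E \<Longrightarrow> cmod (u - v) \<le> B" and Bn: "u \<in> E \<Longrightarrow> cmod u \<le> B"
  using B_prop by auto

lemma fek_bdd: "bdd_above (insert 0 ((\<lambda>z. fprod z n) ` cfg E n))"
  by (rule bdd_aboveI[of _ "B ^ npairs n"]) (use fprod_le[OF _ Bd] B1 in auto)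

lemma fek_nonneg: "0 \<le> fekete_V E n"
  unfolding fekete_V_alt by (rule cSup_upper[OF _ fek_bdd]) simp

lemma fek_ge: "z \<in> cfg E n \<Longrightarrow> fprod z n \<le> fekete_V E n"
  unfolding fekete_V_alt by (rule cSup_upper[OF _ fek_bdd]) simp

lemma fek_le: "fekete_V E n \<le> B ^ npairs n"
  unfolding fekete_V_alt by (rule cSup_least) (use fprod_le[OF _ Bd] B1 in auto)

lemma dseq_nonneg: "0 \<le> dseq E n" by (simp add: dseq_def)

lemma dseq_le: "dseq E n \<le> B"
proof (cases "n \<le> 1")
  case True
  hence "real n * (real n - 1) = 0" by (cases n) auto
  hence "dseq E n = fekete_V E n powr 0" unfolding dseq_def by (metis div_by_0)
  thus ?thesis using B1 by simp
next
  case False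
  hence n2: "2 \<le> n" by simp
  let ?e = "2 / (real n * (real n - 1))"
  have e0: "0 \<le> ?e" using n2 by simp
  have "dseq E n \<le> (B ^ npairs n) powr ?e"
    unfolding dseq_def by (rule powr_mono2[OF e0 fek_nonneg fek_le])
  also have "\<dots> = B powr (real (npairs n) * ?e)"
    using B1 by (simp add: powr_realpow[symmetric] powr_powr)
  also have "real (npairs n) * ?e = 1"
  proof -
    have "real (2 * npairs n) = real (n * (n - 1))" using pairs_count[of n] unfolding npairs_def by metis
    hence "2 * real (npairs n) = real n * (real n - 1)" using n2 by (simp add: of_nat_diff)
    thus ?thesis using n2 by (simp add: field_simps)
  qed
  finally show ?thesis using B1 by simp
qed

definition TD where "TD = transfinite_diameter E"

lemma limsup_d: "limsup (\<lambda>n. ereal (dseq E n)) = ereal TD" and TD_nonneg: "0 \<le> TD" and TD_le: "TD \<le> B"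
proof -
  let ?L = "limsup (\<lambda>n. ereal (dseq E n))"
  have up: "?L \<le> ereal B" by (rule Limsup_bounded) (simp add: dseq_le)
  have "(0::ereal) \<le> liminf (\<lambda>n. ereal (dseq E n))" by (rule Liminf_bounded) (simp add: dseq_nonneg)
  also have "\<dots> \<le> ?L" by (rule Liminf_le_Limsup) simp
  finally have lo: "0 \<le> ?L" by simp
  have fin: "\<bar>?L\<bar> \<noteq> \<infinity>" using up lo by auto
  show L: "?L = ereal TD" unfolding TD_def TD_alt using fin ereal_real by metis
  show "0 \<le> TD" using lo L by simp
  show "TD \<le> B" using up L by simp
qed

lemma TD_ev: assumes "0 < \<epsilon>" shows "eventually (\<lambda>n. dseq E n < TD + \<epsilon>) sequentially"
proof -
  have "limsup (\<lambda>n. ereal (dseq E n)) < ereal (TD + \<epsilon>)" using limsup_d assms by simp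
  from Limsup_lessD[OF this] show ?thesis by simp
qed

lemma TD_upper:
  assumes ev: "eventually (\<lambda>n. dseq E n \<le> u n) sequentially" and lim: "u \<longlonglongrightarrow> L"
  shows "TD \<le> L"
proof -
  have "ereal TD \<le> limsup (\<lambda>n. ereal (u n))"
    unfolding limsup_d[symmetric] by (rule Limsup_mono) (use ev in \<open>simp add: eventually_mono\<close>)
  also have "\<dots> = ereal L" by (rule lim_imp_Limsup) (use lim in auto)
  finally show ?thesis by simp
qed

end


lemma sum_lessThan_real: "2 * (\<Sum>j<N. real j) = real N * (real N - 1)"
  by (induction N) (auto simp: algebra_simps)

lemma monic_block:
  fixes p :: "complex poly"
  assumes p: "degree p = m" "lead_coeff p = 1" and m: "1 \<le> m"
  shows "degree (monom 1 (j mod m) * p ^ (j div m)) = j \<and> lead_coeff (monom 1 (j mod m) * p ^ (j div m)) = 1"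
proof -
  have p0: "p \<noteq> 0" using p by auto
  have "degree (monom 1 (j mod m) * p ^ (j div m)) = j mod m + (j div m) * m"
    using p0 by (simp add: degree_mult_eq degree_monom_eq degree_power_eq p)
  also have "\<dots> = j" by simp
  finally have d: "degree (monom 1 (j mod m) * p ^ (j div m)) = j" .
  have "lead_coeff (monom 1 (j mod m) * p ^ (j div m)) = 1"
    by (simp only: lead_coeff_mult lead_coeff_power p(2) lead_coeff_monom) simp
  with d show ?thesis by blast
qed

lemma e_mult: fixes a b x :: real assumes "a \<noteq> 0" shows "2 / (a * b) * (a * x) = 2 * x / b"
  using assms by simp

context cset begin

lemma fek_poly_bound:
  fixes p :: "complex poly"
  assumes p: "degree p = m" "lead_coeff p = 1" and m: "1 \<le> m" and c: "\<forall>z\<in>E. cmod (poly p z) \<le> c"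
  shows "fekete_V E N \<le> fact N * (B ^ (\<Sum>j<N. j mod m) * c ^ (\<Sum>j<N. j div m))"
proof -
  have c0: "0 \<le> c" using c ne by (meson all_not_in_conv norm_ge_zero order_trans)
  let ?P = "\<lambda>j. monom 1 (j mod m) * p ^ (j div m)"
  have W: "(\<Prod>j<N. B ^ (j mod m) * c ^ (j div m)) = B ^ (\<Sum>j<N. j mod m) * c ^ (\<Sum>j<N. j div m)"
    by (simp add: power_sum prod.distrib)
  show ?thesis unfolding fekete_V_alt
  proof (rule cSup_least)
    fix y assume "y \<in> insert 0 ((\<lambda>z. fprod z N) ` cfg E N)"
    then consider "y = 0" | z where "z \<in> cfg E N" "y = fprod z N" by blast
    thus "y \<le> fact N * (B ^ (\<Sum>j<N. j mod m) * c ^ (\<Sum>j<N. j div m))"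
    proof cases
      case 1 thus ?thesis using B1 c0 by simp
    next
      case 2
      have "y = cmod (det_on {..<N} (\<lambda>j k. z k ^ j))"
        using 2 vander_abs unfolding fprod_def by simp
      also have "det_on {..<N} (\<lambda>j k. z k ^ j) = det_on {..<N} (\<lambda>j k. poly (?P j) (z k))"
        by (rule det_poly_vander[symmetric]) (use monic_block[OF p m] in blast)
      also have "cmod \<dots> \<le> fact (card {..<N}) * (\<Prod>j<N. B ^ (j mod m) * c ^ (j div m))"
      proof (rule det_on_bound)
        fix j k assume "j \<in> {..<N}" "k \<in> {..<N}"
        hence zk: "z k \<in> E" using 2 by (auto simp: cfg_def)
        have "cmod (poly (?P j) (z k)) = cmod (z k) ^ (j mod m) * cmod (poly p (z k)) ^ (j div m)"
          by (simp add: poly_monom norm_mult norm_power)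
        also have "\<dots> \<le> B ^ (j mod m) * c ^ (j div m)"
          by (intro mult_mono power_mono) (use zk Bn c c0 B1 in auto)
        finally show "cmod (poly (?P j) (z k)) \<le> B ^ (j mod m) * c ^ (j div m)" .
      qed simp
      finally show ?thesis using W by simp
    qed
  qed simp
qed

lemma cheb_lower:
  fixes p :: "complex poly"
  assumes p: "degree p = m" "lead_coeff p = 1" and m: "1 \<le> m" and c: "\<forall>z\<in>E. cmod (poly p z) \<le> c"
  shows "TD ^ m \<le> c"
proof -
  have c0: "0 \<le> c" using c ne by (meson all_not_in_conv norm_ge_zero order_trans)
  define e where "e = (\<lambda>N::nat. 2 / (real N * (real N - 1)))"
  define Sm where "Sm = (\<lambda>N. \<Sum>j<N. j mod m)"
  define Sd where "Sd = (\<lambda>N. \<Sum>j<N. j div m)"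
  define W where "W = (\<lambda>N. fact N * (B ^ Sm N * c ^ Sd N))"
  have W0: "0 \<le> W N" for N unfolding W_def using B1 c0 by simp
  have e0: "0 \<le> e N" for N unfolding e_def by (cases N) auto
  have dW: "dseq E N \<le> W N powr e N" for N
  proof -
    have "dseq E N = fekete_V E N powr e N" by (simp add: dseq_def e_def)
    also have "\<dots> \<le> W N powr e N"
      by (rule powr_mono2[OF e0 fek_nonneg]) (use fek_poly_bound[OF p m c, of N] in \<open>simp add: W_def Sm_def Sd_def\<close>)
    finally show ?thesis .
  qed
  show ?thesis
  proof (cases "c = 0")
    case True
    have "TD \<le> 0"
    proof (rule TD_upper[where u="\<lambda>_. 0"])
      show "eventually (\<lambda>N. dseq E N \<le> 0) sequentially"
        using eventually_ge_at_top[of "Suc m"]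
      proof (rule eventually_mono)
        fix N assume N: "Suc m \<le> N"
        have "m \<in> {..<N}" using N by simp
        hence "Sd N \<ge> m div m" unfolding Sd_def by (intro member_le_sum) auto
        hence "Sd N \<noteq> 0" using m by simp
        hence "W N = 0" using True unfolding W_def by simp
        thus "dseq E N \<le> 0" using dW[of N] by simp
      qed
    qed simp
    hence "TD = 0" using TD_nonneg by simp
    thus ?thesis using m c0 by (simp add: power_0_left)
  next
    case False
    hence cp: "0 < c" using c0 by simp
    define f where "f = (\<lambda>N. e N * real (Sm N))"
    define g where "g = (\<lambda>N. e N * ln (fact N))"
    have f0: "0 \<le> f N" for N using e0[of N] unfolding f_def by simp
    have g0: "1 \<le> N \<Longrightarrow> 0 \<le> g N" for N using e0[of N] unfolding g_def by simp
    have f_lim: "f \<longlonglongrightarrow> 0"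
    proof (rule real_tendsto_sandwich[where f="\<lambda>_. 0" and h="\<lambda>N. 2 * real m / (real N - 1)"])
      show "eventually (\<lambda>N. 0 \<le> f N) sequentially" using f0 by simp
      show "eventually (\<lambda>N. f N \<le> 2 * real m / (real N - 1)) sequentially"
        using eventually_ge_at_top[of 2]
      proof eventually_elim
        case (elim N)
        have "Sm N \<le> (\<Sum>j<N. m)" unfolding Sm_def by (rule sum_mono) (use m in auto)
        hence "Sm N \<le> N * m" by simp
        hence "real (Sm N) \<le> real (N * m)" by (simp only: of_nat_le_iff)
        hence "real (Sm N) \<le> real N * real m" by simp
        hence "e N * real (Sm N) \<le> e N * (real N * real m)"
          by (rule mult_left_mono) (rule e0)
        also have "\<dots> = 2 * real m / (real N - 1)" unfolding e_def using elim by (intro e_mult) simp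
        finally show ?case by (simp add: f_def)
      qed
      show "(\<lambda>N. 2 * real m / (real N - 1)) \<longlonglongrightarrow> 0" by real_asymp
    qed simp
    have g_lim: "g \<longlonglongrightarrow> 0"
    proof (rule real_tendsto_sandwich[where f="\<lambda>_. 0" and h="\<lambda>N. 2 * ln (real N) / (real N - 1)"])
      show "eventually (\<lambda>N. 0 \<le> g N) sequentially"
        using eventually_ge_at_top[of 1] by eventually_elim (rule g0)
      show "eventually (\<lambda>N. g N \<le> 2 * ln (real N) / (real N - 1)) sequentially"
        using eventually_ge_at_top[of 2]
      proof eventually_elim
        case (elim N)
        have "fact N \<le> (real (N ^ N))" by (rule fact_le_power)
        hence "ln (fact N) \<le> ln (real N ^ N)"
          by (subst ln_le_cancel_iff) auto
        also have "\<dots> = real N * ln (real N)" by (rule ln_realpow)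
        finally have "e N * ln (fact N) \<le> e N * (real N * ln (real N))"
          by (rule mult_left_mono) (rule e0)
        also have "\<dots> = 2 * ln (real N) / (real N - 1)" unfolding e_def using elim by (intro e_mult) simp
        finally show ?case by (simp add: g_def)
      qed
      show "(\<lambda>N. 2 * ln (real N) / (real N - 1)) \<longlonglongrightarrow> 0" by real_asymp
    qed simp
    have key: "eventually (\<lambda>N. W N powr e N = exp (g N + f N * ln B + (1 - f N) * ln c / real m)) sequentially"
      using eventually_ge_at_top[of 2]
    proof eventually_elim
      case (elim N)
      have Wp: "0 < W N" unfolding W_def using B1 cp by simp
      have lnW: "ln (W N) = ln (fact N) + real (Sm N) * ln B + real (Sd N) * ln c"
        unfolding W_def using B1 cp by (simp add: ln_mult ln_realpow)
      have "(\<Sum>j<N. j) = (\<Sum>j<N. m * (j div m) + j mod m)" by simp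
      also have "\<dots> = m * Sd N + Sm N" unfolding Sd_def Sm_def by (simp only: sum.distrib sum_distrib_left)
      finally have "real (\<Sum>j<N. j) = real m * real (Sd N) + real (Sm N)" by simp
      hence "real m * real (Sd N) = (\<Sum>j<N. real j) - real (Sm N)" by simp
      hence "2 * (real m * real (Sd N)) = real N * (real N - 1) - 2 * real (Sm N)"
        using sum_lessThan_real[of N] by simp
      define T where "T = real N * (real N - 1)"
      have T0: "0 < T" using elim by (simp add: T_def)
      have eT: "e N = 2 / T" by (simp add: e_def T_def)
      have H: "2 * (real m * real (Sd N)) = T - 2 * real (Sm N)" unfolding T_def by fact
      have m0: "real m \<noteq> 0" using m by simp
      have "(1 - f N) / real m = ((T - 2 * real (Sm N)) / T) / real m"
        unfolding f_def eT using T0 by (simp add: field_simps)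
      also have "\<dots> = (2 * (real m * real (Sd N)) / T) / real m" by (simp only: H)
      also have "\<dots> = e N * real (Sd N)" unfolding eT using m0 T0 by (simp add: field_simps)
      finally have "e N * real (Sd N) = (1 - f N) / real m" by simp
      hence "e N * ln (W N) = g N + f N * ln B + (1 - f N) * ln c / real m"
        unfolding lnW g_def f_def by (simp add: algebra_simps)
      thus ?case using Wp by (simp add: powr_def mult.commute)
    qed
    have lim: "(\<lambda>N. exp (g N + f N * ln B + (1 - f N) * ln c / real m)) \<longlonglongrightarrow> exp (0 + 0 * ln B + (1 - 0) * ln c / real m)"
      by (intro tendsto_intros f_lim g_lim) (use m in auto)
    have "TD \<le> exp (ln c / real m)"
    proof (rule TD_upper[OF _ lim[simplified]])
      show "eventually (\<lambda>N. dseq E N \<le> exp (g N + f N * ln B + (1 - f N) * ln c / real m)) sequentially"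
        using key by eventually_elim (metis dW)
    qed
    also have "exp (ln c / real m) = c powr (1 / real m)" using cp by (simp add: powr_def)
    finally have "TD ^ m \<le> (c powr (1 / real m)) ^ m"
      using TD_nonneg by (intro power_mono) auto
    also have "\<dots> = c" using cp m by (simp add: powr_realpow[symmetric] powr_powr)
    finally show ?thesis .
  qed
qed

end

definition gk :: "(nat \<Rightarrow> complex) \<Rightarrow> nat \<Rightarrow> nat \<Rightarrow> real" where
  "gk y n k = (\<Prod>j\<in>{..<n} - {k}. cmod (y k - y j))"

lemma fprod_sq: "fprod y n ^ 2 = (\<Prod>k<n. gk y n k)"
proof -
  let ?h = "\<lambda>i j. cmod (y i - y j)"
  have split: "gk y n k = (\<Prod>j<k. ?h k j) * (\<Prod>j\<in>{k<..<n}. ?h k j)" if "k < n" for k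
  proof -
    have eq: "{..<n} - {k} = {..<k} \<union> {k<..<n}" using that by auto
    have "gk y n k = (\<Prod>j\<in>{..<k} \<union> {k<..<n}. ?h k j)" by (simp only: gk_def eq)
    also have "\<dots> = (\<Prod>j<k. ?h k j) * (\<Prod>j\<in>{k<..<n}. ?h k j)"
      by (rule prod.union_disjoint) auto
    finally show ?thesis .
  qed
  have "(\<Prod>k<n. gk y n k) = (\<Prod>k<n. (\<Prod>j<k. ?h k j) * (\<Prod>j\<in>{k<..<n}. ?h k j))"
    by (rule prod.cong[OF refl]) (rule split, simp)
  also have "\<dots> = (\<Prod>k<n. \<Prod>j<k. ?h k j) * (\<Prod>k<n. \<Prod>j\<in>{k<..<n}. ?h k j)"
    by (rule prod.distrib)
  also have "(\<Prod>k<n. \<Prod>j<k. ?h k j) = (\<Prod>k<n. \<Prod>j<k. ?h j k)"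
    by (intro prod.cong refl norm_minus_commute)
  also have "\<dots> = fprod y n" unfolding fprod_def by (rule prod_triangle_swap[symmetric])
  finally have "(\<Prod>k<n. gk y n k) = fprod y n * fprod y n" unfolding fprod_def .
  thus ?thesis by (simp only: power2_eq_square)
qed

definition Rk :: "(nat \<Rightarrow> complex) \<Rightarrow> nat \<Rightarrow> nat \<Rightarrow> real" where
  "Rk y n k = (\<Prod>i\<in>{..<n} - {k}. \<Prod>j\<in>{..<n} - {i} - {k}. cmod (y i - y j))"

lemma gk_split: assumes k: "k < n" shows "(\<Prod>i<n. gk y n i) = gk y n k ^ 2 * Rk y n k"
proof -
  have A: "(\<Prod>i<n. gk y n i) = gk y n k * (\<Prod>i\<in>{..<n} - {k}. gk y n i)"
    by (rule prod.remove) (use k in auto)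
  have B: "gk y n i = cmod (y k - y i) * (\<Prod>j\<in>{..<n} - {i} - {k}. cmod (y i - y j))"
    if "i \<in> {..<n} - {k}" for i
  proof -
    have eq: "{..<n} - {i} = insert k ({..<n} - {i} - {k})" using that k by auto
    have "gk y n i = (\<Prod>j\<in>insert k ({..<n} - {i} - {k}). cmod (y i - y j))"
      unfolding gk_def by (subst eq) (rule refl)
    also have "\<dots> = cmod (y i - y k) * (\<Prod>j\<in>{..<n} - {i} - {k}. cmod (y i - y j))"
      by (rule prod.insert) auto
    finally show ?thesis by (simp only: norm_minus_commute[of "y i" "y k"])
  qed
  have "(\<Prod>i\<in>{..<n} - {k}. gk y n i) = (\<Prod>i\<in>{..<n} - {k}. cmod (y k - y i) * (\<Prod>j\<in>{..<n} - {i} - {k}. cmod (y i - y j)))"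
    by (rule prod.cong[OF refl]) (rule B)
  also have "\<dots> = gk y n k * Rk y n k"
    unfolding Rk_def gk_def by (rule prod.distrib)
  finally have C: "(\<Prod>i\<in>{..<n} - {k}. gk y n i) = gk y n k * Rk y n k" .
  show ?thesis unfolding A C power2_eq_square by (rule mult.assoc[symmetric])
qed

lemma Rk_upd: "k < n \<Longrightarrow> Rk (y(k := w)) n k = Rk y n k"
  unfolding Rk_def by (intro prod.cong refl) auto

lemma gk_upd: "gk (y(k := w)) n k = (\<Prod>j\<in>{..<n} - {k}. cmod (w - y j))"
  unfolding gk_def by (intro prod.cong refl) auto

lemma fprod_pos: assumes "inj_on x {..<n}" shows "0 < fprod x n"
  unfolding fprod_def
proof (intro prod_pos ballI)
  fix i j assume "i \<in> {..<n}" "j \<in> {i<..<n}"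
  hence "x i \<noteq> x j" using assms unfolding inj_on_def by force
  thus "0 < cmod (x i - x j)" by simp
qed

context cset begin

lemma cheb_upper:
  assumes m: "1 \<le> m"
  shows "\<exists>t. degree t = m \<and> lead_coeff t = 1 \<and>
           (\<forall>z\<in>E. cmod (poly t z) \<le> 2 * fekete_V E (Suc m) powr (2 / real (Suc m)))"
proof -
  define n where "n = Suc m"
  define V where "V = fekete_V E n"
  have V0: "0 \<le> V" unfolding V_def by (rule fek_nonneg)
  show ?thesis
  proof (cases "V = 0")
    case True
    have finE: "finite E \<and> card E \<le> m"
    proof (rule ccontr)
      assume "\<not> (finite E \<and> card E \<le> m)"
      then obtain S where S: "finite S" "card S = n" "S \<subseteq> E"
      proof (cases "finite E")
        case True
        hence "n \<le> card E" using \<open>\<not> (finite E \<and> card E \<le> m)\<close> n_def by auto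
        thus ?thesis using that obtain_subset_with_card_n by metis
      next
        case False thus ?thesis using that infinite_arbitrarily_large by metis
      qed
      obtain h where h: "bij_betw h {0..<card S} S" using ex_bij_betw_nat_finite[OF S(1)] by blast
      have hc: "h \<in> cfg E n" using h S unfolding cfg_def bij_betw_def by auto
      have "inj_on h {..<n}" using h S unfolding bij_betw_def by (simp add: atLeast0LessThan)
      hence "0 < fprod h n" by (rule fprod_pos)
      also have "\<dots> \<le> V" unfolding V_def by (rule fek_ge[OF hc])
      finally show False using True by simp
    qed
    define t where "t = (\<Prod>e\<in>E. [:- e, 1:]) * monom 1 (m - card E)"
    have nz: "(\<Prod>e\<in>E. [:- e, 1:]) \<noteq> 0" using finE by (simp add: prod_zero_iff)
    have "degree t = card E + (m - card E)"
      unfolding t_def using nz by (subst degree_mult_eq) (auto simp: degree_prod_sum_eq degree_monom_eq)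
    hence dt: "degree t = m" using finE by simp
    have lt: "lead_coeff t = 1" unfolding t_def by (simp only: lead_coeff_mult lead_coeff_prod lead_coeff_monom) simp
    have "poly t z = 0" if "z \<in> E" for z
    proof -
      have "poly (\<Prod>e\<in>E. [:- e, 1:]) z = (\<Prod>e\<in>E. z - e)" by (simp add: poly_prod)
      also have "\<dots> = 0" using finE that by (intro prod_zero) auto
      finally show ?thesis unfolding t_def by simp
    qed
    hence "\<forall>z\<in>E. cmod (poly t z) \<le> 2 * fekete_V E (Suc m) powr (2 / real (Suc m))" by simp
    thus ?thesis using dt lt by blast
  next
    case False
    hence Vp: "0 < V" using V0 by simp
    have "\<exists>y\<in>insert 0 ((\<lambda>z. fprod z n) ` cfg E n). V / 2 < y"
      by (rule less_cSupD) (use Vp in \<open>auto simp: V_def fekete_V_alt\<close>)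
    then obtain x where xc: "x \<in> cfg E n" and xP: "V / 2 < fprod x n" using Vp by auto
    define P where "P = fprod x n"
    have Pp: "0 < P" using xP Vp P_def by simp
    have PV: "P \<le> V" unfolding P_def V_def by (rule fek_ge[OF xc])
    define G where "G = P ^ 2"
    have Gp: "0 < G" using Pp G_def by simp
    have Gprod: "G = (\<Prod>k<n. gk x n k)" unfolding G_def P_def by (rule fprod_sq)
    have gk0: "0 \<le> gk x n k" for k unfolding gk_def by (simp add: prod_nonneg)
    obtain k where k: "k < n" and gkle: "gk x n k \<le> G powr (1 / real n)"
    proof (rule ccontr)
      assume "\<not> thesis"
      hence all: "\<And>k. k < n \<Longrightarrow> G powr (1 / real n) < gk x n k" using that by force
      have pos: "0 < gk x n k" if "k < n" for k
      proof -
        have "G powr (1 / real n) < gk x n k" using that by (rule all)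
        moreover have "0 \<le> G powr (1 / real n)" by simp
        ultimately show ?thesis by linarith
      qed
      have "(\<Prod>k<n. G powr (1 / real n)) < (\<Prod>k<n. gk x n k)"
        by (rule prod_mono_strict[of 0]) (use all pos Gp n_def in \<open>auto intro: less_imp_le\<close>)
      also have "(\<Prod>k<n. G powr (1 / real n)) = (G powr (1 / real n)) ^ n" by simp
      also have "\<dots> = G"
      proof -
        have "(G powr (1 / real n)) ^ n = (G powr (1 / real n)) powr (real n)" using Gp by (simp add: powr_realpow)
        also have "\<dots> = G powr (1 / real n * real n)" by (simp add: powr_powr)
        also have "\<dots> = G" using n_def Gp by simp
        finally show ?thesis .
      qed
      finally show False using Gprod by simp
    qed
    define t where "t = (\<Prod>j\<in>{..<n} - {k}. [:- x j, 1:])"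
    have "degree t = (\<Sum>j\<in>{..<n} - {k}. 1)"
      unfolding t_def by (subst degree_prod_sum_eq) auto
    hence dt: "degree t = m" using k n_def by simp
    have lt: "lead_coeff t = 1" unfolding t_def by (simp only: lead_coeff_prod) simp
    have bound: "cmod (poly t w) \<le> 2 * V powr (2 / real n)" if w: "w \<in> E" for w
    proof -
      define y where "y = x(k := w)"
      have yc: "y \<in> cfg E n" using xc w unfolding y_def cfg_def by auto
      have "poly t w = (\<Prod>j\<in>{..<n} - {k}. w - x j)" unfolding t_def poly_prod by simp
      hence "cmod (poly t w) = (\<Prod>j\<in>{..<n} - {k}. cmod (w - x j))" by (simp add: prod_norm)
      also have "\<dots> = gk y n k" unfolding y_def by (rule gk_upd[symmetric])
      finally have pt: "cmod (poly t w) = gk y n k" .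
      have Rnn: "0 \<le> Rk x n k" unfolding Rk_def by (simp add: prod_nonneg)
      have GR: "G = gk x n k ^ 2 * Rk x n k" using Gprod gk_split[OF k] by simp
      hence Rp: "0 < Rk x n k" using Gp Rnn by (cases "Rk x n k = 0") auto
      have e1: "fprod y n ^ 2 = gk y n k ^ 2 * Rk x n k"
      proof -
        have "fprod y n ^ 2 = (\<Prod>i<n. gk y n i)" by (rule fprod_sq)
        also have "\<dots> = gk y n k ^ 2 * Rk y n k" by (rule gk_split[OF k])
        also have "Rk y n k = Rk x n k" unfolding y_def by (rule Rk_upd[OF k])
        finally show ?thesis .
      qed
      have e2: "(2 * P) ^ 2 = (2 * gk x n k) ^ 2 * Rk x n k"
      proof -
        have "P ^ 2 = gk x n k ^ 2 * Rk x n k" using GR unfolding G_def .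
        thus ?thesis by (simp only: power_mult_distrib mult.assoc)
      qed
      have "fprod y n \<le> V" by (rule fek_ge[OF yc, folded V_def])
      also have "\<dots> \<le> 2 * P" using xP P_def by simp
      finally have "fprod y n ^ 2 \<le> (2 * P) ^ 2" using fprod_nonneg by (intro power_mono) auto
      hence "gk y n k ^ 2 * Rk x n k \<le> (2 * gk x n k) ^ 2 * Rk x n k" by (simp only: e1 e2)
      hence "gk y n k ^ 2 \<le> (2 * gk x n k) ^ 2" using Rp by simp
      hence "gk y n k \<le> 2 * gk x n k" by (rule power2_le_imp_le) (simp add: gk0)
      also have "gk x n k \<le> G powr (1 / real n)" by (rule gkle)
      also have "G powr (1 / real n) = P powr (2 / real n)"
      proof -
        have "G powr (1 / real n) = (P powr 2) powr (1 / real n)" unfolding G_def using Pp by (simp add: powr_realpow)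
        also have "\<dots> = P powr (2 / real n)" by (simp add: powr_powr)
        finally show ?thesis .
      qed
      also have "\<dots> \<le> V powr (2 / real n)" using Pp PV by (intro powr_mono2) auto
      finally show ?thesis using pt by simp
    qed
    show ?thesis using dt lt bound unfolding V_def n_def by blast
  qed
qed

lemma leja:
  "\<exists>x. \<forall>i\<le>(M::nat). x i \<in> E \<and> (\<forall>w\<in>E. (\<Prod>k<i. cmod (w - x k)) \<le> (\<Prod>k<i. cmod (x i - x k)))"
proof (induction M)
  case 0
  obtain e where "e \<in> E" using ne by blast
  thus ?case by (intro exI[of _ "\<lambda>_. e"]) auto
next
  case (Suc M)
  then obtain x where x: "\<forall>i\<le>M. x i \<in> E \<and> (\<forall>w\<in>E. (\<Prod>k<i. cmod (w - x k)) \<le> (\<Prod>k<i. cmod (x i - x k)))"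
    by blast
  have "continuous_on E (\<lambda>w. \<Prod>k<Suc M. cmod (w - x k))"
    by (intro continuous_intros)
  then obtain z where z: "z \<in> E" "\<forall>w\<in>E. (\<Prod>k<Suc M. cmod (w - x k)) \<le> (\<Prod>k<Suc M. cmod (z - x k))"
    using continuous_attains_sup[OF cpt ne] by blast
  define x' where "x' = x(Suc M := z)"
  have eq: "(\<Prod>k<i. cmod (w - x' k)) = (\<Prod>k<i. cmod (w - x k))" if "i \<le> Suc M" for i w
    unfolding x'_def by (intro prod.cong refl) (use that in auto)
  show ?case
  proof (intro exI[of _ x'] allI impI conjI ballI)
    fix i assume i: "i \<le> Suc M"
    show "x' i \<in> E" using x z i unfolding x'_def by (cases "i = Suc M") auto
    fix w assume w: "w \<in> E"
    show "(\<Prod>k<i. cmod (w - x' k)) \<le> (\<Prod>k<i. cmod (x' i - x' k))"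
    proof (cases "i = Suc M")
      case True thus ?thesis using z w eq[OF i] unfolding x'_def by simp
    next
      case False
      hence "i \<le> M" using i by simp
      thus ?thesis using x w eq[OF i] unfolding x'_def by simp
    qed
  qed
qed

lemma leja_lower:
  obtains x where "\<forall>i\<le>M. x i \<in> E" "\<forall>i\<le>M. TD ^ i \<le> (\<Prod>k<i. cmod (x i - x k))"
proof -
  obtain x where x: "\<forall>i\<le>M. x i \<in> E \<and> (\<forall>w\<in>E. (\<Prod>k<i. cmod (w - x k)) \<le> (\<Prod>k<i. cmod (x i - x k)))"
    using leja by blast
  have "TD ^ i \<le> (\<Prod>k<i. cmod (x i - x k))" if i: "i \<le> M" for i
  proof (cases "i = 0")
    case True thus ?thesis by simp
  next
    case False
    show ?thesis
    proof (rule cheb_lower[of "newt x i" i])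
      show "degree (newt x i) = i" by (rule newt_degree)
      show "lead_coeff (newt x i) = 1" using newt_lead newt_degree by metis
      show "1 \<le> i" using False by simp
      show "\<forall>z\<in>E. cmod (poly (newt x i) z) \<le> (\<Prod>k<i. cmod (x i - x k))"
        using x i by (simp add: poly_newt prod_norm[symmetric])
    qed
  qed
  thus ?thesis using that x by blast
qed

lemma cheb_eps:
  assumes eps: "0 < \<epsilon>"
  shows "\<exists>C\<ge>1. \<forall>i. \<exists>t. degree t = i \<and> lead_coeff t = 1 \<and> (\<forall>z\<in>E. cmod (poly t z) \<le> C * (TD + \<epsilon>) ^ i)"
proof -
  define q where "q = TD + \<epsilon>"
  have qp: "0 < q" using eps TD_nonneg q_def by simp
  obtain N0 where N0: "\<And>N. N0 \<le> N \<Longrightarrow> dseq E N < q"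
    using TD_ev[OF eps] unfolding q_def eventually_sequentially by blast
  define \<mu> where "\<mu> = min 1 q ^ N0"
  have \<mu>p: "0 < \<mu>" using qp \<mu>_def by simp
  have \<mu>1: "\<mu> \<le> 1" unfolding \<mu>_def using qp by (intro power_le_one) auto
  define C where "C = 2 * B ^ N0 / \<mu>"
  have C2: "2 \<le> C"
  proof -
    have "1 \<le> B ^ N0" using B1 by simp
    hence "2 * 1 \<le> 2 * B ^ N0 / \<mu>" using \<mu>p \<mu>1 by (simp add: field_simps)
    thus ?thesis unfolding C_def by simp
  qed
  have main: "\<exists>t. degree t = i \<and> lead_coeff t = 1 \<and> (\<forall>z\<in>E. cmod (poly t z) \<le> C * q ^ i)" for i
  proof (cases "i = 0")
    case True
    thus ?thesis using C2 by (intro exI[of _ 1]) auto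
  next
    case False
    hence i1: "1 \<le> i" by simp
    obtain t where t: "degree t = i" "lead_coeff t = 1"
      "\<forall>z\<in>E. cmod (poly t z) \<le> 2 * fekete_V E (Suc i) powr (2 / real (Suc i))"
      using cheb_upper[OF i1] by blast
    have eq: "fekete_V E (Suc i) powr (2 / real (Suc i)) = dseq E (Suc i) ^ i"
    proof (cases "fekete_V E (Suc i) = 0")
      case True thus ?thesis using i1 by (simp add: dseq_def)
    next
      case False
      hence fp: "0 < fekete_V E (Suc i)" using fek_nonneg[of "Suc i"] by simp
      have "dseq E (Suc i) ^ i = fekete_V E (Suc i) powr (2 / (real (Suc i) * (real (Suc i) - 1)) * real i)"
        unfolding dseq_def using fp by (simp add: powr_realpow[symmetric] powr_powr)
      also have "2 / (real (Suc i) * (real (Suc i) - 1)) * real i = 2 / real (Suc i)"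
        using i1 by simp
      finally show ?thesis by simp
    qed
    have "2 * dseq E (Suc i) ^ i \<le> C * q ^ i"
    proof (cases "N0 \<le> Suc i")
      case True
      hence "dseq E (Suc i) ^ i \<le> q ^ i" using N0[of "Suc i"] dseq_nonneg by (intro power_mono) auto
      hence "2 * dseq E (Suc i) ^ i \<le> 2 * q ^ i" by simp
      also have "\<dots> \<le> C * q ^ i" using C2 qp by (intro mult_right_mono) auto
      finally show ?thesis .
    next
      case False
      have "dseq E (Suc i) ^ i \<le> B ^ i" using dseq_le dseq_nonneg by (intro power_mono) auto
      also have "\<dots> \<le> B ^ N0" using B1 False by (intro power_increasing) auto
      finally have "2 * dseq E (Suc i) ^ i \<le> C * \<mu>" unfolding C_def using \<mu>p by simp
      also have "\<mu> \<le> q ^ i"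
      proof -
        have "\<mu> \<le> min 1 q ^ i" unfolding \<mu>_def using False qp by (intro power_decreasing) auto
        also have "\<dots> \<le> q ^ i" using qp by (intro power_mono) auto
        finally show ?thesis .
      qed
      hence "C * \<mu> \<le> C * q ^ i" using C2 by simp
      finally show ?thesis .
    qed
    thus ?thesis using t eq by (intro exI[of _ t]) auto
  qed
  show ?thesis using C2 main unfolding q_def by (intro exI[of _ C]) auto
qed

end

definition tri :: "real \<Rightarrow> real \<Rightarrow> nat \<Rightarrow> (nat \<times> nat) set" where
  "tri a b n = {J. a * real (fst J) + b * real (snd J) \<le> a * b * real n}"

lemma triangle_eq:
  assumes a: "0 < a" and b: "0 < b"
  shows "triangle a b = {p. 0 \<le> fst p \<and> 0 \<le> snd p \<and> a * fst p + b * snd p \<le> a * b}"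
proof -
  have "triangle a b = {u *\<^sub>R (0,0) + v *\<^sub>R (b,0) + w *\<^sub>R (0,a) | u v w.
          0 \<le> u \<and> 0 \<le> v \<and> 0 \<le> w \<and> u + v + w = (1::real)}"
    unfolding triangle_def by (rule convex_hull_3)
  also have "\<dots> = {p. 0 \<le> fst p \<and> 0 \<le> snd p \<and> a * fst p + b * snd p \<le> a * b}"
  proof (intro set_eqI iffI)
    fix p assume "p \<in> {u *\<^sub>R (0,0) + v *\<^sub>R (b,0) + w *\<^sub>R (0,a) | u v w.
          0 \<le> u \<and> 0 \<le> v \<and> 0 \<le> w \<and> u + v + w = (1::real)}"
    then obtain u v w where uvw: "0 \<le> u" "0 \<le> v" "0 \<le> w" "u + v + w = 1"
      and p: "p = u *\<^sub>R (0,0) + v *\<^sub>R (b,0) + w *\<^sub>R (0,a)" by blast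
    have p': "p = (v * b, w * a)" using p by simp
    have "a * (v * b) + b * (w * a) = a * b * (v + w)" by (simp add: algebra_simps)
    also have "\<dots> \<le> a * b * 1" using uvw a b by (intro mult_left_mono) auto
    finally show "p \<in> {p. 0 \<le> fst p \<and> 0 \<le> snd p \<and> a * fst p + b * snd p \<le> a * b}"
      using p' uvw a b by simp
  next
    fix p assume "p \<in> {p. 0 \<le> fst p \<and> 0 \<le> snd p \<and> a * fst p + b * snd p \<le> a * b}"
    hence h: "0 \<le> fst p" "0 \<le> snd p" "a * fst p + b * snd p \<le> a * b" by auto
    define v where "v = fst p / b"
    define w where "w = snd p / a"
    have "v + w = (a * fst p + b * snd p) / (a * b)" unfolding v_def w_def using a b by (simp add: field_simps)
    also have "\<dots> \<le> 1" using h a b by simp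
    finally have vw: "v + w \<le> 1" .
    have "p = (1 - v - w) *\<^sub>R (0,0) + v *\<^sub>R (b,0) + w *\<^sub>R (0,a)"
      unfolding v_def w_def using a b by (simp add: prod_eq_iff)
    moreover have "0 \<le> 1 - v - w" "0 \<le> v" "0 \<le> w" using vw h a b v_def w_def by auto
    ultimately show "p \<in> {u *\<^sub>R (0,0) + v *\<^sub>R (b,0) + w *\<^sub>R (0,a) | u v w.
          0 \<le> u \<and> 0 \<le> v \<and> 0 \<le> w \<and> u + v + w = (1::real)}"
      by (intro CollectI exI[of _ "1 - v - w"] exI[of _ v] exI[of _ w]) auto
  qed
  finally show ?thesis .
qed

lemma exps_tri:
  assumes a: "0 < a" and b: "0 < b"
  shows "exps (triangle a b) n = tri a b n"
proof (intro set_eqI iffI)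
  fix J assume "J \<in> exps (triangle a b) n"
  then obtain p where p: "p \<in> triangle a b" "(real (fst J), real (snd J)) = real n *\<^sub>R p"
    unfolding exps_def by blast
  have h: "a * fst p + b * snd p \<le> a * b" using p(1) triangle_eq[OF a b] by auto
  have "a * real (fst J) + b * real (snd J) = real n * (a * fst p + b * snd p)"
    using p(2) by (auto simp: prod_eq_iff algebra_simps)
  also have "\<dots> \<le> real n * (a * b)" using h by (intro mult_left_mono) auto
  finally show "J \<in> tri a b n" unfolding tri_def by (simp add: algebra_simps)
next
  fix J assume J: "J \<in> tri a b n"
  hence h: "a * real (fst J) + b * real (snd J) \<le> a * b * real n" unfolding tri_def by simp
  show "J \<in> exps (triangle a b) n"
  proof (cases "n = 0")
    case True
    hence "a * real (fst J) + b * real (snd J) \<le> 0" using h by simp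
    moreover have "0 \<le> a * real (fst J)" "0 \<le> b * real (snd J)" using a b by auto
    ultimately have "a * real (fst J) = 0" "b * real (snd J) = 0" by linarith+
    hence "fst J = 0 \<and> snd J = 0" using a b by simp
    moreover have "(0::real, 0::real) \<in> triangle a b" using triangle_eq[OF a b] a b by auto
    ultimately show ?thesis unfolding exps_def using True by (auto simp: image_iff prod_eq_iff)
  next
    case False
    define p where "p = (real (fst J) / real n, real (snd J) / real n)"
    have "a * fst p + b * snd p = (a * real (fst J) + b * real (snd J)) / real n"
      unfolding p_def using False by (simp add: field_simps)
    also have "\<dots> \<le> a * b" using h False by (simp add: field_simps)
    finally have "p \<in> triangle a b" using triangle_eq[OF a b] unfolding p_def by auto
    moreover have "(real (fst J), real (snd J)) = real n *\<^sub>R p" unfolding p_def using False by simp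
    ultimately show ?thesis unfolding exps_def by blast
  qed
qed

lemma tri_bound:
  assumes a: "0 < a" and b: "0 < b" and J: "J \<in> tri a b n"
  shows "real (fst J) \<le> b * real n" "real (snd J) \<le> a * real n"
proof -
  have h: "a * real (fst J) + b * real (snd J) \<le> a * b * real n" using J unfolding tri_def by simp
  have e1: "a * b * real n = a * (b * real n)" "a * b * real n = b * (a * real n)" by (simp_all add: mult_ac)
  have n1: "0 \<le> a * real (fst J)" "0 \<le> b * real (snd J)" using a b by auto
  have "a * real (fst J) \<le> a * (b * real n)" using h e1 n1 by linarith
  thus "real (fst J) \<le> b * real n" using a by simp
  have "b * real (snd J) \<le> b * (a * real n)" using h e1 n1 by linarith
  thus "real (snd J) \<le> a * real n" using b by simp
qed

lemma tri_subset:
  assumes a: "0 < a" and b: "0 < b"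
  shows "tri a b n \<subseteq> {..nat \<lceil>b * real n\<rceil>} \<times> {..nat \<lceil>a * real n\<rceil>}"
proof
  fix J assume J: "J \<in> tri a b n"
  have "real (fst J) \<le> b * real n" "real (snd J) \<le> a * real n" using tri_bound[OF a b J] by auto
  hence "fst J \<le> nat \<lceil>b * real n\<rceil>" "snd J \<le> nat \<lceil>a * real n\<rceil>" by linarith+
  thus "J \<in> {..nat \<lceil>b * real n\<rceil>} \<times> {..nat \<lceil>a * real n\<rceil>}" by (cases J) auto
qed

lemma tri_finite: "0 < a \<Longrightarrow> 0 < b \<Longrightarrow> finite (tri a b n)"
  using tri_subset by (rule finite_subset) auto

lemma tri_lower:
  assumes a: "0 < a" and b: "0 < b" and I: "I \<in> tri a b n" and K: "fst K \<le> fst I" "snd K \<le> snd I"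
  shows "K \<in> tri a b n"
proof -
  have "a * real (fst K) + b * real (snd K) \<le> a * real (fst I) + b * real (snd I)"
    using a b K by (intro add_mono mult_left_mono) auto
  thus ?thesis using I unfolding tri_def by simp
qed

lemma det_poly_biv:
  fixes P Q :: "nat \<Rightarrow> complex poly" and \<zeta> :: "nat \<times> nat \<Rightarrow> complex \<times> complex"
  assumes fin: "finite A"
    and low: "\<And>I K. I \<in> A \<Longrightarrow> fst K \<le> fst I \<Longrightarrow> snd K \<le> snd I \<Longrightarrow> K \<in> A"
    and mP: "\<And>i. degree (P i) = i" "\<And>i. lead_coeff (P i) = 1"
    and mQ: "\<And>j. degree (Q j) = j" "\<And>j. lead_coeff (Q j) = 1"
  shows "det_on A (\<lambda>I J. poly (P (fst I)) (fst (\<zeta> J)) * poly (Q (snd I)) (snd (\<zeta> J)))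
       = det_on A (\<lambda>I J. mono2 I (\<zeta> J))"
proof -
  let ?U = "\<lambda>I K. coeff (P (fst I)) (fst K) * coeff (Q (snd I)) (snd K)"
  have exp: "poly (P (fst I)) (fst z) * poly (Q (snd I)) (snd z) = (\<Sum>K\<in>A. ?U I K * mono2 K z)"
    if I: "I \<in> A" for I z
  proof -
    let ?box = "{..fst I} \<times> {..snd I}"
    have box: "?box \<subseteq> A"
    proof
      fix K assume "K \<in> ?box" thus "K \<in> A" using low[OF I, of K] by (cases K) auto
    qed
    have "(\<Sum>K\<in>A. ?U I K * mono2 K z) = (\<Sum>K\<in>?box. ?U I K * mono2 K z)"
    proof (rule sum.mono_neutral_right[OF fin box], rule ballI)
      fix K assume K: "K \<in> A - ?box"
      hence "fst K > fst I \<or> snd K > snd I" by (cases K) auto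
      hence "coeff (P (fst I)) (fst K) = 0 \<or> coeff (Q (snd I)) (snd K) = 0"
        using coeff_eq_0[of "P (fst I)" "fst K"] coeff_eq_0[of "Q (snd I)" "snd K"] mP mQ by auto
      thus "?U I K * mono2 K z = 0" by auto
    qed
    also have "\<dots> = (\<Sum>k\<le>fst I. \<Sum>l\<le>snd I. ?U I (k, l) * mono2 (k, l) z)"
      by (subst sum.cartesian_product) (simp add: case_prod_unfold)
    also have "\<dots> = (\<Sum>k\<le>fst I. coeff (P (fst I)) k * fst z ^ k) * (\<Sum>l\<le>snd I. coeff (Q (snd I)) l * snd z ^ l)"
      unfolding sum_product mono2_def by (intro sum.cong refl) (simp add: mult_ac)
    also have "\<dots> = poly (P (fst I)) (fst z) * poly (Q (snd I)) (snd z)"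
      by (simp add: poly_altdef mP mQ)
    finally show ?thesis by simp
  qed
  have "det_on A (\<lambda>I J. poly (P (fst I)) (fst (\<zeta> J)) * poly (Q (snd I)) (snd (\<zeta> J)))
      = det_on A (\<lambda>I J. \<Sum>K\<in>A. ?U I K * mono2 K (\<zeta> J))"
    by (rule det_on_cong[OF fin]) (rule exp)
  also have "\<dots> = det_on A (\<lambda>I J. mono2 I (\<zeta> J))"
  proof (rule det_on_unitri[OF fin, where rk="\<lambda>K. int (fst K + snd K)"])
    fix I assume "I \<in> A"
    show "?U I I = 1" using mP(2)[of "fst I"] mQ(2)[of "snd I"] by (simp add: mP(1) mQ(1))
  next
    fix I K assume "I \<in> A" "K \<in> A" "?U I K \<noteq> 0" "K \<noteq> I"
    hence "coeff (P (fst I)) (fst K) \<noteq> 0" "coeff (Q (snd I)) (snd K) \<noteq> 0" by auto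
    hence "fst K \<le> fst I" "snd K \<le> snd I" using le_degree mP(1) mQ(1) by metis+
    thus "int (fst K + snd K) < int (fst I + snd I)" using \<open>K \<noteq> I\<close> by (cases K, cases I) auto
  qed
  finally show ?thesis .
qed


locale two = E: cset E + F: cset F for E F +
  fixes a b :: real
  assumes a: "0 < a" and b: "0 < b"
begin

definition S1 where "S1 n = (\<Sum>J\<in>tri a b n. fst J)"
definition S2 where "S2 n = (\<Sum>J\<in>tri a b n. snd J)"

lemma finA: "finite (tri a b n)" by (rule tri_finite[OF a b])

lemma lowA: "I \<in> tri a b n \<Longrightarrow> fst K \<le> fst I \<Longrightarrow> snd K \<le> snd I \<Longrightarrow> K \<in> tri a b n"
  by (rule tri_lower[OF a b])

lemma Vn_alt: "Vn (triangle a b) (E \<times> F) n = Sup (insert 0 ((\<lambda>\<zeta>. cmod (det_on (tri a b n) (\<lambda>I J. mono2 I (\<zeta> J)))) ` {\<zeta>. \<forall>J\<in>tri a b n. \<zeta> J \<in> E \<times> F}))"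
  unfolding Vn_def exps_tri[OF a b] by (rule arg_cong[where f=Sup]) auto

lemma det_upper:
  assumes eps: "0 < \<epsilon>"
  shows "\<exists>K\<ge>1. \<forall>n \<zeta>. (\<forall>J\<in>tri a b n. \<zeta> J \<in> E \<times> F) \<longrightarrow>
     cmod (det_on (tri a b n) (\<lambda>I J. mono2 I (\<zeta> J))) \<le>
       fact (card (tri a b n)) * (K ^ card (tri a b n) * ((E.TD + \<epsilon>) ^ S1 n * (F.TD + \<epsilon>) ^ S2 n))"
proof -
  obtain C1 where C1: "C1 \<ge> 1" "\<forall>i. \<exists>t. degree t = i \<and> lead_coeff t = 1 \<and> (\<forall>z\<in>E. cmod (poly t z) \<le> C1 * (E.TD + \<epsilon>) ^ i)"
    using E.cheb_eps[OF eps] by blast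
  have "\<exists>P. \<forall>i. degree (P i) = i \<and> lead_coeff (P i) = 1 \<and> (\<forall>z\<in>E. cmod (poly (P i) z) \<le> C1 * (E.TD + \<epsilon>) ^ i)"
    using C1(2) by (rule choice)
  then obtain P where P: "\<And>i. degree (P i) = i" "\<And>i. lead_coeff (P i) = 1"
    "\<And>i z. z \<in> E \<Longrightarrow> cmod (poly (P i) z) \<le> C1 * (E.TD + \<epsilon>) ^ i" by blast
  obtain C2 where C2: "C2 \<ge> 1" "\<forall>i. \<exists>t. degree t = i \<and> lead_coeff t = 1 \<and> (\<forall>z\<in>F. cmod (poly t z) \<le> C2 * (F.TD + \<epsilon>) ^ i)"
    using F.cheb_eps[OF eps] by blast
  have "\<exists>Q. \<forall>i. degree (Q i) = i \<and> lead_coeff (Q i) = 1 \<and> (\<forall>z\<in>F. cmod (poly (Q i) z) \<le> C2 * (F.TD + \<epsilon>) ^ i)"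
    using C2(2) by (rule choice)
  then obtain Q where Q: "\<And>i. degree (Q i) = i" "\<And>i. lead_coeff (Q i) = 1"
    "\<And>i z. z \<in> F \<Longrightarrow> cmod (poly (Q i) z) \<le> C2 * (F.TD + \<epsilon>) ^ i" by blast
  have qE: "0 \<le> E.TD + \<epsilon>" using E.TD_nonneg eps by simp
  have qF: "0 \<le> F.TD + \<epsilon>" using F.TD_nonneg eps by simp
  have main: "cmod (det_on (tri a b n) (\<lambda>I J. mono2 I (\<zeta> J))) \<le>
       fact (card (tri a b n)) * ((C1 * C2) ^ card (tri a b n) * ((E.TD + \<epsilon>) ^ S1 n * (F.TD + \<epsilon>) ^ S2 n))"
    if z: "\<forall>J\<in>tri a b n. \<zeta> J \<in> E \<times> F" for n \<zeta>
  proof -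
    have "det_on (tri a b n) (\<lambda>I J. mono2 I (\<zeta> J)) =
          det_on (tri a b n) (\<lambda>I J. poly (P (fst I)) (fst (\<zeta> J)) * poly (Q (snd I)) (snd (\<zeta> J)))"
      by (rule det_poly_biv[symmetric, OF finA lowA P(1,2) Q(1,2)])
    also have "cmod \<dots> \<le> fact (card (tri a b n)) * (\<Prod>I\<in>tri a b n. (C1 * (E.TD + \<epsilon>) ^ fst I) * (C2 * (F.TD + \<epsilon>) ^ snd I))"
    proof (rule det_on_bound[OF finA])
      fix I J assume "I \<in> tri a b n" "J \<in> tri a b n"
      hence zJ: "fst (\<zeta> J) \<in> E" "snd (\<zeta> J) \<in> F" using z by auto
      show "cmod (poly (P (fst I)) (fst (\<zeta> J)) * poly (Q (snd I)) (snd (\<zeta> J))) \<le> (C1 * (E.TD + \<epsilon>) ^ fst I) * (C2 * (F.TD + \<epsilon>) ^ snd I)"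
        unfolding norm_mult by (rule mult_mono[OF P(3)[OF zJ(1)] Q(3)[OF zJ(2)]]) (use C1 qE in auto)
    qed
    also have "(\<Prod>I\<in>tri a b n. (C1 * (E.TD + \<epsilon>) ^ fst I) * (C2 * (F.TD + \<epsilon>) ^ snd I))
        = (C1 * C2) ^ card (tri a b n) * ((E.TD + \<epsilon>) ^ S1 n * (F.TD + \<epsilon>) ^ S2 n)"
      unfolding S1_def S2_def power_sum prod.distrib power_mult_distrib by (simp add: mult_ac)
    finally show ?thesis .
  qed
  have "1 * 1 \<le> C1 * C2" by (rule mult_mono) (use C1(1) C2(1) in auto)
  thus ?thesis using main by (intro exI[of _ "C1 * C2"]) auto
qed

lemma Vn_upper:
  assumes eps: "0 < \<epsilon>"
  shows "\<exists>K\<ge>1. \<forall>n. Vn (triangle a b) (E \<times> F) n \<le>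
       fact (card (tri a b n)) * (K ^ card (tri a b n) * ((E.TD + \<epsilon>) ^ S1 n * (F.TD + \<epsilon>) ^ S2 n))"
proof -
  obtain K where K: "K \<ge> 1" "\<And>n \<zeta>. (\<forall>J\<in>tri a b n. \<zeta> J \<in> E \<times> F) \<Longrightarrow>
     cmod (det_on (tri a b n) (\<lambda>I J. mono2 I (\<zeta> J))) \<le>
       fact (card (tri a b n)) * (K ^ card (tri a b n) * ((E.TD + \<epsilon>) ^ S1 n * (F.TD + \<epsilon>) ^ S2 n))"
    using det_upper[OF eps] by blast
  have qE: "0 \<le> E.TD + \<epsilon>" using E.TD_nonneg eps by simp
  have qF: "0 \<le> F.TD + \<epsilon>" using F.TD_nonneg eps by simp
  have "Vn (triangle a b) (E \<times> F) n \<le>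
       fact (card (tri a b n)) * (K ^ card (tri a b n) * ((E.TD + \<epsilon>) ^ S1 n * (F.TD + \<epsilon>) ^ S2 n))" for n
    unfolding Vn_alt by (rule cSup_least) (use K qE qF in auto)
  thus ?thesis using K(1) by blast
qed

lemma Vn_bdd: "bdd_above (insert 0 ((\<lambda>\<zeta>. cmod (det_on (tri a b n) (\<lambda>I J. mono2 I (\<zeta> J)))) ` {\<zeta>. \<forall>J\<in>tri a b n. \<zeta> J \<in> E \<times> F}))"
proof -
  obtain K where K: "K \<ge> 1" "\<And>n \<zeta>. (\<forall>J\<in>tri a b n. \<zeta> J \<in> E \<times> F) \<Longrightarrow>
     cmod (det_on (tri a b n) (\<lambda>I J. mono2 I (\<zeta> J))) \<le>
       fact (card (tri a b n)) * (K ^ card (tri a b n) * ((E.TD + 1) ^ S1 n * (F.TD + 1) ^ S2 n))"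
    using det_upper[of 1] by auto
  have qE: "0 \<le> E.TD + 1" using E.TD_nonneg by simp
  have qF: "0 \<le> F.TD + 1" using F.TD_nonneg by simp
  show ?thesis
    by (rule bdd_aboveI[of _ "fact (card (tri a b n)) * (K ^ card (tri a b n) * ((E.TD + 1) ^ S1 n * (F.TD + 1) ^ S2 n))"])
       (use K qE qF in auto)
qed

lemma Vn_lower: "E.TD ^ S1 n * F.TD ^ S2 n \<le> Vn (triangle a b) (E \<times> F) n"
proof -
  define M where "M = nat \<lceil>a * real n\<rceil> + nat \<lceil>b * real n\<rceil>"
  have Mb: "fst J \<le> M \<and> snd J \<le> M" if "J \<in> tri a b n" for J
    using tri_subset[OF a b, of n] that unfolding M_def by fastforce
  obtain x where x: "\<forall>i\<le>M. x i \<in> E" "\<forall>i\<le>M. E.TD ^ i \<le> (\<Prod>k<i. cmod (x i - x k))"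
    using E.leja_lower by blast
  obtain y where y: "\<forall>i\<le>M. y i \<in> F" "\<forall>i\<le>M. F.TD ^ i \<le> (\<Prod>k<i. cmod (y i - y k))"
    using F.leja_lower by blast
  define \<zeta> where "\<zeta> = (\<lambda>J::nat\<times>nat. (x (fst J), y (snd J)))"
  have zin: "\<forall>J\<in>tri a b n. \<zeta> J \<in> E \<times> F" using x y Mb unfolding \<zeta>_def by auto
  have "det_on (tri a b n) (\<lambda>I J. mono2 I (\<zeta> J)) =
        det_on (tri a b n) (\<lambda>I J. poly (newt x (fst I)) (fst (\<zeta> J)) * poly (newt y (snd I)) (snd (\<zeta> J)))"
    by (rule det_poly_biv[symmetric, OF finA lowA newt_degree[of x] newt_lead[of x] newt_degree[of y] newt_lead[of y]])
  also have "\<dots> = (\<Prod>I\<in>tri a b n. poly (newt x (fst I)) (fst (\<zeta> I)) * poly (newt y (snd I)) (snd (\<zeta> I)))"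
  proof (rule det_on_triangular[OF finA, where rk="\<lambda>K. int (fst K + snd K)"])
    fix I J assume IJ: "I \<in> tri a b n" "J \<in> tri a b n"
      and nz: "poly (newt x (fst I)) (fst (\<zeta> J)) * poly (newt y (snd I)) (snd (\<zeta> J)) \<noteq> 0" and ne: "I \<noteq> J"
    have "fst I \<le> fst J"
    proof (rule ccontr)
      assume "\<not> fst I \<le> fst J"
      hence "poly (newt x (fst I)) (fst (\<zeta> J)) = 0" unfolding poly_newt \<zeta>_def
        by (intro prod_zero) (auto intro!: bexI[of _ "fst J"])
      thus False using nz by simp
    qed
    moreover have "snd I \<le> snd J"
    proof (rule ccontr)
      assume "\<not> snd I \<le> snd J"
      hence "poly (newt y (snd I)) (snd (\<zeta> J)) = 0" unfolding poly_newt \<zeta>_def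
        by (intro prod_zero) (auto intro!: bexI[of _ "snd J"])
      thus False using nz by simp
    qed
    ultimately show "int (fst I + snd I) < int (fst J + snd J)" using ne by (cases I, cases J) auto
  qed
  finally have "cmod (det_on (tri a b n) (\<lambda>I J. mono2 I (\<zeta> J))) =
      (\<Prod>I\<in>tri a b n. (\<Prod>k<fst I. cmod (x (fst I) - x k)) * (\<Prod>k<snd I. cmod (y (snd I) - y k)))"
    unfolding \<zeta>_def poly_newt by (simp add: prod_norm[symmetric] norm_mult)
  also have "\<dots> \<ge> (\<Prod>I\<in>tri a b n. E.TD ^ fst I * F.TD ^ snd I)"
  proof (rule prod_mono, rule conjI)
    fix I assume I: "I \<in> tri a b n"
    show "0 \<le> E.TD ^ fst I * F.TD ^ snd I" using E.TD_nonneg F.TD_nonneg by simp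
    show "E.TD ^ fst I * F.TD ^ snd I \<le> (\<Prod>k<fst I. cmod (x (fst I) - x k)) * (\<Prod>k<snd I. cmod (y (snd I) - y k))"
      by (rule mult_mono) (use x y Mb[OF I] E.TD_nonneg F.TD_nonneg in \<open>auto intro: prod_nonneg\<close>)
  qed
  also have "(\<Prod>I\<in>tri a b n. E.TD ^ fst I * F.TD ^ snd I) = E.TD ^ S1 n * F.TD ^ S2 n"
    unfolding S1_def S2_def power_sum prod.distrib ..
  finally have "E.TD ^ S1 n * F.TD ^ S2 n \<le> cmod (det_on (tri a b n) (\<lambda>I J. mono2 I (\<zeta> J)))" .
  also have "\<dots> \<le> Vn (triangle a b) (E \<times> F) n"
    unfolding Vn_alt by (rule cSup_upper[OF _ Vn_bdd]) (use zin in auto)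
  finally show ?thesis .
qed

end

lemma sum_id_real: "2 * (\<Sum>i\<le>K. real i) = real K * (real K + 1)"
  by (induction K) (auto simp: algebra_simps)

lemma sum_sq_real: "6 * (\<Sum>i\<le>K. real i ^ 2) = real K * (real K + 1) * (2 * real K + 1)"
  by (induction K) (auto simp: algebra_simps power2_eq_square)

lemma nat_floor_le: fixes x :: real assumes "0 \<le> x" shows "real (nat \<lfloor>x\<rfloor>) \<le> x"
proof -
  have "0 \<le> \<lfloor>x\<rfloor>" using assms by simp
  hence "real (nat \<lfloor>x\<rfloor>) = real_of_int \<lfloor>x\<rfloor>" by (simp add: of_nat_nat)
  thus ?thesis by simp
qed
lemma nat_floor_gt: fixes x :: real assumes "0 \<le> x" shows "x - 1 < real (nat \<lfloor>x\<rfloor>)"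
proof -
  have "0 \<le> \<lfloor>x\<rfloor>" using assms by simp
  hence "real (nat \<lfloor>x\<rfloor>) = real_of_int \<lfloor>x\<rfloor>" by (simp add: of_nat_nat)
  thus ?thesis by linarith
qed
lemma le_nat_floor_iff: fixes x :: real assumes "0 \<le> x" shows "j \<le> nat \<lfloor>x\<rfloor> \<longleftrightarrow> real j \<le> x"
proof -
  have "0 \<le> \<lfloor>x\<rfloor>" using assms by simp
  hence "j \<le> nat \<lfloor>x\<rfloor> \<longleftrightarrow> int j \<le> \<lfloor>x\<rfloor>" by linarith
  also have "\<dots> \<longleftrightarrow> real j \<le> x" by (simp add: le_floor_iff)
  finally show ?thesis .
qed

lemma card_le_real:
  fixes b R :: real assumes b: "0 < b" and R: "0 \<le> R"
  shows "R / b \<le> real (card {j::nat. b * real j \<le> R})" "real (card {j::nat. b * real j \<le> R}) \<le> R / b + 1"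
proof -
  have Rb: "0 \<le> R / b" using R b by simp
  have eq: "{j::nat. b * real j \<le> R} = {..nat \<lfloor>R / b\<rfloor>}"
  proof (intro set_eqI iffI)
    fix j assume "j \<in> {j::nat. b * real j \<le> R}"
    hence "real j \<le> R / b" using b by (simp add: field_simps)
    thus "j \<in> {..nat \<lfloor>R / b\<rfloor>}" using le_nat_floor_iff[OF Rb] by simp
  next
    fix j assume "j \<in> {..nat \<lfloor>R / b\<rfloor>}"
    hence "real j \<le> R / b" using le_nat_floor_iff[OF Rb] by simp
    thus "j \<in> {j::nat. b * real j \<le> R}" using b by (simp add: field_simps)
  qed
  have f0: "0 \<le> \<lfloor>R / b\<rfloor>" using R b by simp
  have c: "real (card {j::nat. b * real j \<le> R}) = real_of_int \<lfloor>R / b\<rfloor> + 1"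
    unfolding eq using f0 by simp
  show "R / b \<le> real (card {j::nat. b * real j \<le> R})" unfolding c by linarith
  show "real (card {j::nat. b * real j \<le> R}) \<le> R / b + 1" unfolding c by linarith
qed

definition G1 :: "real \<Rightarrow> real \<Rightarrow> nat \<Rightarrow> nat" where
  "G1 a b n = (\<Sum>J\<in>tri a b n. fst J)"

lemma G1_bounds:
  fixes n :: nat
  assumes a: "0 < a" and b: "0 < b"
  defines "K \<equiv> nat \<lfloor>b * real n\<rfloor>"
  shows "(\<Sum>i\<le>K. real i * (a * real n - a * real i / b)) \<le> real (G1 a b n)"
    "real (G1 a b n) \<le> (\<Sum>i\<le>K. real i * (a * real n - a * real i / b + 1))"
proof -
  define c where "c = (\<lambda>i. card {j::nat. b * real j \<le> a * b * real n - a * real i})"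
  have Kiff: "a * real i \<le> a * b * real n \<longleftrightarrow> i \<le> K" for i
  proof -
    have "a * real i \<le> a * b * real n \<longleftrightarrow> real i \<le> b * real n" using a by (simp add: mult.assoc)
    also have "\<dots> \<longleftrightarrow> i \<le> K" unfolding K_def using le_nat_floor_iff[of "b * real n" i] b by simp
    finally show ?thesis .
  qed
  have tri_eq: "tri a b n = Sigma {..K} (\<lambda>i. {j. b * real j \<le> a * b * real n - a * real i})"
  proof (intro set_eqI iffI)
    fix J assume J: "J \<in> tri a b n"
    hence h: "a * real (fst J) + b * real (snd J) \<le> a * b * real n" unfolding tri_def by simp
    have "0 \<le> b * real (snd J)" using b by simp
    hence "a * real (fst J) \<le> a * b * real n" using h by linarith
    hence "fst J \<le> K" using Kiff by blast
    thus "J \<in> Sigma {..K} (\<lambda>i. {j. b * real j \<le> a * b * real n - a * real i})" using h by (cases J) auto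
  next
    fix J assume "J \<in> Sigma {..K} (\<lambda>i. {j. b * real j \<le> a * b * real n - a * real i})"
    thus "J \<in> tri a b n" unfolding tri_def by (cases J) auto
  qed
  have finB: "finite {j::nat. b * real j \<le> a * b * real n - a * real i}" for i
  proof -
    have "{j::nat. b * real j \<le> a * b * real n - a * real i} \<subseteq> {..nat \<lceil>a * real n\<rceil>}"
    proof
      fix j assume "j \<in> {j::nat. b * real j \<le> a * b * real n - a * real i}"
      hence j1: "b * real j \<le> a * b * real n - a * real i" by simp
      have "0 \<le> a * real i" using a by simp
      moreover have "a * b * real n = b * (a * real n)" by (simp add: mult_ac)
      ultimately have "b * real j \<le> b * (a * real n)" using j1 by linarith
      hence "real j \<le> a * real n" using b by simp
      thus "j \<in> {..nat \<lceil>a * real n\<rceil>}" by simp linarith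
    qed
    thus ?thesis by (rule finite_subset) simp
  qed
  have G: "real (G1 a b n) = (\<Sum>i\<le>K. real i * real (c i))"
  proof -
    have "G1 a b n = (\<Sum>(i,j)\<in>Sigma {..K} (\<lambda>i. {j. b * real j \<le> a * b * real n - a * real i}). i)"
      unfolding G1_def tri_eq by (simp add: case_prod_unfold)
    also have "\<dots> = (\<Sum>i\<le>K. \<Sum>j\<in>{j. b * real j \<le> a * b * real n - a * real i}. i)"
      by (rule sum.Sigma[symmetric]) (use finB in auto)
    also have "\<dots> = (\<Sum>i\<le>K. i * c i)" unfolding c_def by (simp add: mult.commute)
    finally show ?thesis by simp
  qed
  have cb: "a * real n - a * real i / b \<le> real (c i) \<and> real (c i) \<le> a * real n - a * real i / b + 1"
    if i: "i \<le> K" for i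
  proof -
    have R0: "0 \<le> a * b * real n - a * real i" using Kiff i by simp
    have e: "(a * b * real n - a * real i) / b = a * real n - a * real i / b" using b by (simp add: field_simps)
    show ?thesis using card_le_real[OF b R0] unfolding c_def e by simp
  qed
  show "(\<Sum>i\<le>K. real i * (a * real n - a * real i / b)) \<le> real (G1 a b n)"
    unfolding G by (rule sum_mono) (use cb in \<open>auto intro: mult_left_mono\<close>)
  show "real (G1 a b n) \<le> (\<Sum>i\<le>K. real i * (a * real n - a * real i / b + 1))"
    unfolding G by (rule sum_mono) (use cb in \<open>auto intro: mult_left_mono\<close>)
qed

lemma G1_lim:
  assumes a: "0 < a" and b: "0 < b"
  shows "(\<lambda>n. real (G1 a b n) / real n ^ 3) \<longlonglongrightarrow> a * b ^ 2 / 6"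
proof -
  define K where "K = (\<lambda>n. nat \<lfloor>b * real n\<rfloor>)"
  define k where "k = (\<lambda>n. real (K n) / real n)"
  define h where "h = (\<lambda>n::nat. 1 / real n)"
  have h_lim: "h \<longlonglongrightarrow> 0" unfolding h_def by real_asymp
  have k_lim: "k \<longlonglongrightarrow> b"
  proof (rule real_tendsto_sandwich[where f="\<lambda>n. b - 1 / real n" and h="\<lambda>n. b"])
    show "eventually (\<lambda>n. b - 1 / real n \<le> k n) sequentially"
      using eventually_ge_at_top[of 1]
    proof eventually_elim
      case (elim n)
      have "b * real n - 1 \<le> real (K n)" unfolding K_def using nat_floor_gt[of "b * real n"] b by simp
      hence "(b * real n - 1) / real n \<le> real (K n) / real n" using elim by (intro divide_right_mono) auto
      thus ?case unfolding k_def using elim by (simp add: field_simps)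
    qed
    show "eventually (\<lambda>n. k n \<le> b) sequentially"
      using eventually_ge_at_top[of 1]
    proof eventually_elim
      case (elim n)
      have "real (K n) \<le> b * real n" unfolding K_def using nat_floor_le[of "b * real n"] b by simp
      hence "real (K n) / real n \<le> b * real n / real n" using elim by (intro divide_right_mono) auto
      thus ?case unfolding k_def using elim by simp
    qed
    show "(\<lambda>n. b - 1 / real n) \<longlonglongrightarrow> b" by real_asymp
  qed simp
  define Lo where "Lo = (\<lambda>n. a / 2 * k n * (k n + h n) - a / (6 * b) * k n * (k n + h n) * (2 * k n + h n))"
  define Ex where "Ex = (\<lambda>n. k n * (k n + h n) * h n / 2)"
  have eqs: "(\<Sum>i\<le>K n. real i * (a * real n - a * real i / b)) / real n ^ 3 = Lo n \<and>
             (\<Sum>i\<le>K n. real i * (a * real n - a * real i / b + 1)) / real n ^ 3 = Lo n + Ex n"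
    if n: "1 \<le> n" for n
  proof -
    have s1: "(\<Sum>i\<le>K n. real i) = real (K n) * (real (K n) + 1) / 2" using sum_id_real[of "K n"] by simp
    have s2: "(\<Sum>i\<le>K n. real i ^ 2) = real (K n) * (real (K n) + 1) * (2 * real (K n) + 1) / 6"
      using sum_sq_real[of "K n"] by simp
    have A: "(\<Sum>i\<le>K n. real i * (a * real n - a * real i / b)) =
          a * real n * (\<Sum>i\<le>K n. real i) - a / b * (\<Sum>i\<le>K n. real i ^ 2)"
      by (simp add: sum_subtractf sum_distrib_left algebra_simps power2_eq_square)
    have B: "(\<Sum>i\<le>K n. real i * (a * real n - a * real i / b + 1)) =
          (\<Sum>i\<le>K n. real i * (a * real n - a * real i / b)) + (\<Sum>i\<le>K n. real i)"
      by (simp only: distrib_left mult_1_right sum.distrib)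
    have kK: "real (K n) = k n * real n" unfolding k_def using n by simp
    have hn: "h n * real n = 1" unfolding h_def using n by simp
    have np: "0 < real n" using n by simp
    define N where "N = real n"
    define kk where "kk = k n"
    define hh where "hh = h n"
    have kK': "real (K n) = kk * N" unfolding kk_def N_def by (rule kK)
    have hn': "hh * N = 1" unfolding hh_def N_def by (rule hn)
    have one: "1 = hh * N" using hn' by simp
    have Lo_eq: "(a * N * (real (K n) * (real (K n) + 1) / 2) - a / b * (real (K n) * (real (K n) + 1) * (2 * real (K n) + 1) / 6)) / N ^ 3
        = a / 2 * kk * (kk + hh) - a / (6 * b) * kk * (kk + hh) * (2 * kk + hh)"
      unfolding kK' using np b unfolding N_def[symmetric] by (subst (1 2 3) one) (simp add: field_simps power3_eq_cube)
    have Ex_eq: "(real (K n) * (real (K n) + 1) / 2) / N ^ 3 = kk * (kk + hh) * hh / 2"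
    proof -
      have hh_eq: "hh = 1 / N" unfolding hh_def h_def N_def ..
      show ?thesis unfolding kK' hh_eq using np unfolding N_def[symmetric] by (simp add: field_simps power3_eq_cube)
    qed
    show ?thesis
      unfolding B A s1 s2 Lo_def Ex_def using Lo_eq Ex_eq unfolding N_def kk_def hh_def
      by (simp add: add_divide_distrib)
  qed
  have Lo_lim: "Lo \<longlonglongrightarrow> a / 2 * b * (b + 0) - a / (6 * b) * b * (b + 0) * (2 * b + 0)"
    unfolding Lo_def by (intro tendsto_intros k_lim h_lim)
  have Lo_val: "a / 2 * b * (b + 0) - a / (6 * b) * b * (b + 0) * (2 * b + 0) = a * b ^ 2 / 6"
    using b by (simp add: field_simps power2_eq_square)
  have "(\<lambda>n. k n * (k n + h n) * h n) \<longlonglongrightarrow> b * (b + 0) * 0" by (intro tendsto_intros k_lim h_lim)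
  hence "(\<lambda>n. k n * (k n + h n) * h n / 2) \<longlonglongrightarrow> b * (b + 0) * 0 / 2" by (intro tendsto_divide tendsto_const) simp_all
  hence Ex_lim: "Ex \<longlonglongrightarrow> 0" unfolding Ex_def by simp
  show ?thesis
  proof (rule real_tendsto_sandwich[where f=Lo and h="\<lambda>n. Lo n + Ex n"])
    show "eventually (\<lambda>n. Lo n \<le> real (G1 a b n) / real n ^ 3) sequentially"
      using eventually_ge_at_top[of 1]
    proof eventually_elim
      case (elim n)
      have "(\<Sum>i\<le>K n. real i * (a * real n - a * real i / b)) \<le> real (G1 a b n)"
        using G1_bounds(1)[OF a b, of n] unfolding K_def .
      hence "(\<Sum>i\<le>K n. real i * (a * real n - a * real i / b)) / real n ^ 3 \<le> real (G1 a b n) / real n ^ 3"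
        by (rule divide_right_mono) simp
      thus ?case using eqs[OF elim] by simp
    qed
    show "eventually (\<lambda>n. real (G1 a b n) / real n ^ 3 \<le> Lo n + Ex n) sequentially"
      using eventually_ge_at_top[of 1]
    proof eventually_elim
      case (elim n)
      have "real (G1 a b n) \<le> (\<Sum>i\<le>K n. real i * (a * real n - a * real i / b + 1))"
        using G1_bounds(2)[OF a b, of n] unfolding K_def .
      hence "real (G1 a b n) / real n ^ 3 \<le> (\<Sum>i\<le>K n. real i * (a * real n - a * real i / b + 1)) / real n ^ 3"
        by (rule divide_right_mono) simp
      thus ?case using eqs[OF elim] by simp
    qed
    show "Lo \<longlonglongrightarrow> a * b ^ 2 / 6" using Lo_lim unfolding Lo_val .
    show "(\<lambda>n. Lo n + Ex n) \<longlonglongrightarrow> a * b ^ 2 / 6" using tendsto_add[OF Lo_lim Ex_lim] unfolding Lo_val by simp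
  qed
qed


lemma nat_ceil_le: fixes x :: real assumes "0 \<le> x" shows "real (nat \<lceil>x\<rceil>) \<le> x + 1"
proof -
  have "0 \<le> \<lceil>x\<rceil>" using assms by simp
  hence "real (nat \<lceil>x\<rceil>) = real_of_int \<lceil>x\<rceil>" by (simp add: of_nat_nat)
  thus ?thesis using ceiling_correct[of x] by linarith
qed

context two begin

lemma S1_G1: "S1 n = G1 a b n" unfolding S1_def G1_def ..

lemma S2_G1: "S2 n = G1 b a n"
proof -
  have "tri b a n = prod.swap ` tri a b n"
  proof (intro set_eqI iffI)
    fix J assume "J \<in> tri b a n"
    hence "prod.swap J \<in> tri a b n" unfolding tri_def by (simp add: algebra_simps)
    thus "J \<in> prod.swap ` tri a b n" by (intro image_eqI[of _ _ "prod.swap J"]) simp_all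
  next
    fix J assume "J \<in> prod.swap ` tri a b n"
    thus "J \<in> tri b a n" unfolding tri_def by (auto simp: algebra_simps)
  qed
  hence "G1 b a n = (\<Sum>J\<in>prod.swap ` tri a b n. fst J)" unfolding G1_def by simp
  also have "\<dots> = (\<Sum>J\<in>tri a b n. snd J)" by (subst sum.reindex) (auto simp: inj_on_def)
  finally show ?thesis unfolding S2_def ..
qed

lemma lsum: "ln_sum (triangle a b) n = S1 n + S2 n"
  unfolding ln_sum_def exps_tri[OF a b] S1_def S2_def by (rule sum.distrib)

lemma S1_lim: "(\<lambda>n. real (S1 n) / real n ^ 3) \<longlonglongrightarrow> a * b ^ 2 / 6"
  unfolding S1_G1 by (rule G1_lim[OF a b])

lemma S2_lim: "(\<lambda>n. real (S2 n) / real n ^ 3) \<longlonglongrightarrow> b * a ^ 2 / 6"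
  unfolding S2_G1 by (rule G1_lim[OF b a])

definition cl where "cl = (a * b ^ 2 + b * a ^ 2) / 6"

lemma cl_pos: "0 < cl" unfolding cl_def using a b by (simp add: add_pos_pos)

lemma l_lim: "(\<lambda>n. real (S1 n + S2 n) / real n ^ 3) \<longlonglongrightarrow> cl"
proof -
  have "(\<lambda>n. real (S1 n) / real n ^ 3 + real (S2 n) / real n ^ 3) \<longlonglongrightarrow> a * b ^ 2 / 6 + b * a ^ 2 / 6"
    by (rule tendsto_add[OF S1_lim S2_lim])
  thus ?thesis unfolding cl_def by (simp add: add_divide_distrib)
qed

lemma l_ev: "eventually (\<lambda>n. 0 < S1 n + S2 n) sequentially"
proof -
  have "eventually (\<lambda>n. 0 < real (S1 n + S2 n) / real n ^ 3) sequentially"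
    using order_tendstoD(1)[OF l_lim cl_pos] .
  thus ?thesis by eventually_elim (auto simp: zero_less_divide_iff)
qed

lemma r_lim: "(\<lambda>n. real (S1 n) / real (S1 n + S2 n)) \<longlonglongrightarrow> b / (a + b)"
proof -
  have lim1: "(\<lambda>n. (real (S1 n) / real n ^ 3) / (real (S1 n + S2 n) / real n ^ 3)) \<longlonglongrightarrow> (a * b ^ 2 / 6) / cl"
    by (rule tendsto_divide[OF S1_lim l_lim]) (use cl_pos in simp)
  have val: "(a * b ^ 2 / 6) / cl = b / (a + b)"
  proof -
    have "cl \<noteq> 0" using cl_pos by simp
    moreover have "a + b \<noteq> 0" using a b by simp
    moreover have "a * b ^ 2 / 6 * (a + b) = b * cl" unfolding cl_def by (simp add: algebra_simps power2_eq_square)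
    ultimately show ?thesis by (simp add: frac_eq_eq)
  qed
  have ev: "eventually (\<lambda>n. (real (S1 n) / real n ^ 3) / (real (S1 n + S2 n) / real n ^ 3) = real (S1 n) / real (S1 n + S2 n)) sequentially"
    using eventually_ge_at_top[of 1] by eventually_elim simp
  show ?thesis using Lim_transform_eventually[OF lim1[unfolded val] ev] .
qed

lemma r2_lim: "(\<lambda>n. real (S2 n) / real (S1 n + S2 n)) \<longlonglongrightarrow> a / (a + b)"
proof -
  have lim1: "(\<lambda>n. 1 - real (S1 n) / real (S1 n + S2 n)) \<longlonglongrightarrow> 1 - b / (a + b)"
    by (intro tendsto_intros r_lim)
  have val: "1 - b / (a + b) = a / (a + b)" using a b by (simp add: field_simps)
  have ev: "eventually (\<lambda>n. 1 - real (S1 n) / real (S1 n + S2 n) = real (S2 n) / real (S1 n + S2 n)) sequentially"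
    using l_ev
  proof eventually_elim
    case (elim n)
    have "0 < real (S1 n + S2 n)" by (simp only: of_nat_0_less_iff) (rule elim)
    hence p: "0 < real (S1 n) + real (S2 n)" by simp
    thus ?case by (simp add: field_simps)
  qed
  show ?thesis using Lim_transform_eventually[OF lim1[unfolded val] ev] .
qed

lemma card_tri_ge: "1 \<le> card (tri a b n)"
proof -
  have "(0, 0) \<in> tri a b n" unfolding tri_def using a b by simp
  hence "tri a b n \<noteq> {}" by blast
  thus ?thesis using finA by (simp add: Suc_le_eq card_gt_0_iff)
qed

lemma card_tri_le: "real (card (tri a b n)) \<le> (b * real n + 2) * (a * real n + 2)"
proof -
  have "card (tri a b n) \<le> card ({..nat \<lceil>b * real n\<rceil>} \<times> {..nat \<lceil>a * real n\<rceil>})"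
    by (rule card_mono) (use tri_subset[OF a b] in auto)
  also have "\<dots> = (nat \<lceil>b * real n\<rceil> + 1) * (nat \<lceil>a * real n\<rceil> + 1)" by (simp add: card_cartesian_product)
  finally have "real (card (tri a b n)) \<le> real ((nat \<lceil>b * real n\<rceil> + 1) * (nat \<lceil>a * real n\<rceil> + 1))"
    by (rule of_nat_mono)
  hence "real (card (tri a b n)) \<le> (real (nat \<lceil>b * real n\<rceil>) + 1) * (real (nat \<lceil>a * real n\<rceil>) + 1)"
    by (simp only: of_nat_mult of_nat_add of_nat_1)
  also have "\<dots> \<le> (b * real n + 2) * (a * real n + 2)"
  proof (rule mult_mono)
    have bn: "0 \<le> b * real n" and an: "0 \<le> a * real n" using a b by auto
    show "real (nat \<lceil>b * real n\<rceil>) + 1 \<le> b * real n + 2" using nat_ceil_le[OF bn] by linarith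
    show "real (nat \<lceil>a * real n\<rceil>) + 1 \<le> a * real n + 2" using nat_ceil_le[OF an] by linarith
    show "0 \<le> real (nat \<lceil>a * real n\<rceil>) + 1" by (intro add_nonneg_nonneg of_nat_0_le_iff zero_le_one)
    show "0 \<le> b * real n + 2" using bn by simp
  qed
  finally show ?thesis .
qed

lemma err_lim:
  assumes K: "1 \<le> K"
  shows "(\<lambda>n. (ln (fact (card (tri a b n))) + real (card (tri a b n)) * ln K) / real (S1 n + S2 n)) \<longlonglongrightarrow> 0"
proof -
  define D where "D = (\<lambda>n::nat. (b * real n + 2) * (a * real n + 2))"
  define X where "X = (\<lambda>n::nat. (D n * ln (D n) + D n * ln K) / real n ^ 3)"
  have X_lim: "X \<longlonglongrightarrow> 0" unfolding X_def D_def using a b K by real_asymp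
  have XY: "(\<lambda>n. X n / (real (S1 n + S2 n) / real n ^ 3)) \<longlonglongrightarrow> 0 / cl"
    by (rule tendsto_divide[OF X_lim l_lim]) (use cl_pos in simp)
  show ?thesis
  proof (rule real_tendsto_sandwich[where f="\<lambda>_. 0" and h="\<lambda>n. X n / (real (S1 n + S2 n) / real n ^ 3)"])
    show "eventually (\<lambda>n. 0 \<le> (ln (fact (card (tri a b n))) + real (card (tri a b n)) * ln K) / real (S1 n + S2 n)) sequentially"
      using K by (intro always_eventually allI divide_nonneg_nonneg add_nonneg_nonneg) auto
    show "eventually (\<lambda>n. (ln (fact (card (tri a b n))) + real (card (tri a b n)) * ln K) / real (S1 n + S2 n)
            \<le> X n / (real (S1 n + S2 n) / real n ^ 3)) sequentially"
      using l_ev eventually_ge_at_top[of 1]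
    proof eventually_elim
      case (elim n)
      define d where "d = real (card (tri a b n))"
      have d1: "1 \<le> d" unfolding d_def using card_tri_ge[of n] by simp
      have dD: "d \<le> D n" unfolding d_def D_def by (rule card_tri_le)
      have "ln (fact (card (tri a b n))) \<le> ln (real (card (tri a b n) ^ card (tri a b n)))"
        using fact_le_power[of "card (tri a b n)", where 'a=real] by (subst ln_le_cancel_iff) auto
      also have "\<dots> = d * ln d" unfolding d_def by (simp add: ln_realpow)
      also have "\<dots> \<le> D n * ln (D n)" using d1 dD by (intro mult_mono) auto
      finally have f1: "ln (fact (card (tri a b n))) \<le> D n * ln (D n)" .
      have f2: "d * ln K \<le> D n * ln K" using dD K by (intro mult_right_mono) auto
      have lp: "0 < real (S1 n + S2 n)" by (simp only: of_nat_0_less_iff) (rule elim(1))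
      have "(ln (fact (card (tri a b n))) + d * ln K) / real (S1 n + S2 n) \<le> (D n * ln (D n) + D n * ln K) / real (S1 n + S2 n)"
        using f1 f2 lp by (intro divide_right_mono) auto
      also have "\<dots> = X n / (real (S1 n + S2 n) / real n ^ 3)" unfolding X_def using elim by simp
      finally show ?case unfolding d_def .
    qed
    show "(\<lambda>n. X n / (real (S1 n + S2 n) / real n ^ 3)) \<longlonglongrightarrow> 0" using XY by simp
  qed simp
qed

end


lemma lin_div: fixes l :: real shows "1 / l * (A + s1 * x + s2 * y) = A / l + s1 / l * x + s2 / l * y"
  by (simp add: add_divide_distrib algebra_simps)

lemma lin_div2: fixes l :: real shows "1 / l * (s1 * x + s2 * y) = s1 / l * x + s2 / l * y"
  by (simp add: add_divide_distrib algebra_simps)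

context two begin

definition u where "u n = Vn (triangle a b) (E \<times> F) n powr (1 / real (ln_sum (triangle a b) n))"

definition \<beta> where "\<beta> = b / (a + b)"
definition \<alpha> where "\<alpha> = a / (a + b)"

lemma Vn_nonneg: "0 \<le> Vn (triangle a b) (E \<times> F) n"
  using Vn_lower[of n] E.TD_nonneg F.TD_nonneg by (meson order_trans zero_le_mult_iff zero_le_power)

lemma u_nonneg: "0 \<le> u n" unfolding u_def by simp

lemma upper_eps:
  assumes eps: "0 < \<epsilon>"
  shows "limsup (\<lambda>n. ereal (u n)) \<le> ereal ((E.TD + \<epsilon>) powr \<beta> * (F.TD + \<epsilon>) powr \<alpha>)"
proof -
  obtain K where K: "K \<ge> 1" and KV: "\<And>n. Vn (triangle a b) (E \<times> F) n \<le>
       fact (card (tri a b n)) * (K ^ card (tri a b n) * ((E.TD + \<epsilon>) ^ S1 n * (F.TD + \<epsilon>) ^ S2 n))"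
    using Vn_upper[OF eps] by blast
  define q1 where "q1 = E.TD + \<epsilon>"
  define q2 where "q2 = F.TD + \<epsilon>"
  have q1: "0 < q1" unfolding q1_def using E.TD_nonneg eps by simp
  have q2: "0 < q2" unfolding q2_def using F.TD_nonneg eps by simp
  define d where "d = (\<lambda>n. card (tri a b n))"
  define W where "W = (\<lambda>n. fact (d n) * (K ^ d n * (q1 ^ S1 n * q2 ^ S2 n)))"
  define err where "err = (\<lambda>n. (ln (fact (d n)) + real (d n) * ln K) / real (S1 n + S2 n))"
  define r1 where "r1 = (\<lambda>n. real (S1 n) / real (S1 n + S2 n))"
  define r2 where "r2 = (\<lambda>n. real (S2 n) / real (S1 n + S2 n))"
  have Wp: "0 < W n" for n unfolding W_def using K q1 q2 by simp
  have ev: "eventually (\<lambda>n. u n \<le> exp (err n + r1 n * ln q1 + r2 n * ln q2)) sequentially"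
    using l_ev
  proof eventually_elim
    case (elim n)
    have lp: "0 < real (S1 n + S2 n)" by (simp only: of_nat_0_less_iff) (rule elim)
    have "u n \<le> W n powr (1 / real (S1 n + S2 n))"
      unfolding u_def lsum by (rule powr_mono2) (use lp Vn_nonneg KV in \<open>auto simp: W_def d_def q1_def q2_def\<close>)
    also have "W n powr (1 / real (S1 n + S2 n)) = exp (1 / real (S1 n + S2 n) * ln (W n))"
      using Wp[of n] by (simp add: powr_def)
    also have "ln (W n) = ln (fact (d n)) + real (d n) * ln K + real (S1 n) * ln q1 + real (S2 n) * ln q2"
      unfolding W_def using K q1 q2 by (simp add: ln_mult ln_realpow)
    also have "1 / real (S1 n + S2 n) * (ln (fact (d n)) + real (d n) * ln K + real (S1 n) * ln q1 + real (S2 n) * ln q2)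
        = err n + r1 n * ln q1 + r2 n * ln q2"
      unfolding err_def r1_def r2_def by (rule lin_div)
    finally show ?case .
  qed
  have lim: "(\<lambda>n. exp (err n + r1 n * ln q1 + r2 n * ln q2)) \<longlonglongrightarrow> exp (0 + \<beta> * ln q1 + \<alpha> * ln q2)"
  proof (intro tendsto_intros)
    show "err \<longlonglongrightarrow> 0" unfolding err_def d_def by (rule err_lim[OF K])
    show "r1 \<longlonglongrightarrow> \<beta>" unfolding r1_def \<beta>_def by (rule r_lim)
    show "r2 \<longlonglongrightarrow> \<alpha>" unfolding r2_def \<alpha>_def by (rule r2_lim)
  qed
  have val: "exp (0 + \<beta> * ln q1 + \<alpha> * ln q2) = q1 powr \<beta> * q2 powr \<alpha>"
    using q1 q2 by (simp add: powr_def exp_add mult.commute)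
  have "limsup (\<lambda>n. ereal (u n)) \<le> limsup (\<lambda>n. ereal (exp (err n + r1 n * ln q1 + r2 n * ln q2)))"
    by (rule Limsup_mono) (use ev in \<open>simp add: eventually_mono\<close>)
  also have "\<dots> = ereal (exp (0 + \<beta> * ln q1 + \<alpha> * ln q2))"
    by (rule lim_imp_Limsup) (use lim in auto)
  finally have "limsup (\<lambda>n. ereal (u n)) \<le> ereal (q1 powr \<beta> * q2 powr \<alpha>)" unfolding val .
  thus ?thesis unfolding q1_def q2_def .
qed

lemma lower:
  "ereal (E.TD powr \<beta> * F.TD powr \<alpha>) \<le> liminf (\<lambda>n. ereal (u n))"
proof (cases "E.TD = 0 \<or> F.TD = 0")
  case True
  hence z: "E.TD powr \<beta> * F.TD powr \<alpha> = 0" by auto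
  have "ereal 0 \<le> liminf (\<lambda>n. ereal (u n))" by (rule Liminf_bounded) (simp add: u_nonneg)
  thus ?thesis unfolding z .
next
  case False
  hence t1: "0 < E.TD" and t2: "0 < F.TD" using E.TD_nonneg F.TD_nonneg by auto
  define r1 where "r1 = (\<lambda>n. real (S1 n) / real (S1 n + S2 n))"
  define r2 where "r2 = (\<lambda>n. real (S2 n) / real (S1 n + S2 n))"
  have ev: "eventually (\<lambda>n. exp (r1 n * ln E.TD + r2 n * ln F.TD) \<le> u n) sequentially"
    using l_ev
  proof eventually_elim
    case (elim n)
    have lp: "0 < real (S1 n + S2 n)" by (simp only: of_nat_0_less_iff) (rule elim)
    have Lp: "0 < E.TD ^ S1 n * F.TD ^ S2 n" using t1 t2 by simp
    have lnL: "ln (E.TD ^ S1 n * F.TD ^ S2 n) = real (S1 n) * ln E.TD + real (S2 n) * ln F.TD"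
      using t1 t2 by (simp add: ln_mult ln_realpow)
    have "exp (r1 n * ln E.TD + r2 n * ln F.TD) = exp (1 / real (S1 n + S2 n) * ln (E.TD ^ S1 n * F.TD ^ S2 n))"
      unfolding r1_def r2_def lnL lin_div2 ..
    also have "\<dots> = (E.TD ^ S1 n * F.TD ^ S2 n) powr (1 / real (S1 n + S2 n))"
    proof -
      have Lne: "E.TD ^ S1 n * F.TD ^ S2 n \<noteq> 0" using Lp by linarith
      show ?thesis by (simp only: powr_def if_not_P[OF Lne])
    qed
    also have "\<dots> \<le> u n"
      unfolding u_def lsum by (rule powr_mono2) (use lp Lp Vn_lower in auto)
    finally show ?case .
  qed
  have lim: "(\<lambda>n. exp (r1 n * ln E.TD + r2 n * ln F.TD)) \<longlonglongrightarrow> exp (\<beta> * ln E.TD + \<alpha> * ln F.TD)"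
  proof (intro tendsto_intros)
    show "r1 \<longlonglongrightarrow> \<beta>" unfolding r1_def \<beta>_def by (rule r_lim)
    show "r2 \<longlonglongrightarrow> \<alpha>" unfolding r2_def \<alpha>_def by (rule r2_lim)
  qed
  have val: "exp (\<beta> * ln E.TD + \<alpha> * ln F.TD) = E.TD powr \<beta> * F.TD powr \<alpha>"
    using t1 t2 by (simp add: powr_def exp_add mult.commute)
  have "ereal (exp (\<beta> * ln E.TD + \<alpha> * ln F.TD)) = liminf (\<lambda>n. ereal (exp (r1 n * ln E.TD + r2 n * ln F.TD)))"
    by (rule lim_imp_Liminf[symmetric]) (use lim in auto)
  also have "\<dots> \<le> liminf (\<lambda>n. ereal (u n))"
    by (rule Liminf_mono) (use ev in \<open>simp add: eventually_mono\<close>)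
  finally show ?thesis unfolding val .
qed

lemma main: "delta_C (triangle a b) (E \<times> F) = E.TD powr \<beta> * F.TD powr \<alpha>"
proof -
  let ?L = "E.TD powr \<beta> * F.TD powr \<alpha>"
  define f where "f = (\<lambda>k::nat. (E.TD + 1 / real (Suc k)) powr \<beta> * (F.TD + 1 / real (Suc k)) powr \<alpha>)"
  have bp: "0 < \<beta>" and ap: "0 < \<alpha>" unfolding \<alpha>_def \<beta>_def using a b by auto
  have e0: "(\<lambda>k::nat. 1 / real (Suc k)) \<longlonglongrightarrow> 0" by (rule LIMSEQ_Suc[OF lim_inverse_n'])
  have "(\<lambda>k. E.TD + 1 / real (Suc k)) \<longlonglongrightarrow> E.TD + 0" by (intro tendsto_intros e0)
  hence l1: "(\<lambda>k. (E.TD + 1 / real (Suc k)) powr \<beta>) \<longlonglongrightarrow> E.TD powr \<beta>"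
    using bp E.TD_nonneg by (intro tendsto_powr') auto
  have "(\<lambda>k. F.TD + 1 / real (Suc k)) \<longlonglongrightarrow> F.TD + 0" by (intro tendsto_intros e0)
  hence l2: "(\<lambda>k. (F.TD + 1 / real (Suc k)) powr \<alpha>) \<longlonglongrightarrow> F.TD powr \<alpha>"
    using ap F.TD_nonneg by (intro tendsto_powr') auto
  have fl: "(\<lambda>k. ereal (f k)) \<longlonglongrightarrow> ereal ?L"
    unfolding f_def by (intro tendsto_ereal tendsto_mult l1 l2)
  have up: "limsup (\<lambda>n. ereal (u n)) \<le> ereal ?L"
    by (rule LIMSEQ_le_const[OF fl]) (use upper_eps[of "1 / real (Suc _)"] in \<open>auto simp: f_def\<close>)
  have "ereal ?L \<le> liminf (\<lambda>n. ereal (u n))" by (rule lower)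
  also have "\<dots> \<le> limsup (\<lambda>n. ereal (u n))" by (rule Liminf_le_Limsup) simp
  finally have "limsup (\<lambda>n. ereal (u n)) = ereal ?L" using up by simp
  thus ?thesis unfolding delta_C_def u_def[symmetric] by simp
qed

end


lemma TD_empty: "transfinite_diameter {} = 0"
proof -
  have fV: "fekete_V {} n = 0" if "1 \<le> n" for n
  proof -
    have S: "{(\<Prod>i<n. \<Prod>j\<in>{i<..<n}. cmod (z i - z j)) | z. \<forall>i<n. z i \<in> ({}::complex set)} = {}"
      using that by (fastforce simp: Suc_le_eq)
    show ?thesis unfolding fekete_V_def S by simp
  qed
  have ev: "eventually (\<lambda>n. ereal (fekete_V {} n powr (2 / (real n * (real n - 1)))) = ereal 0) sequentially"
    using eventually_ge_at_top[of 1] by eventually_elim (simp add: fV)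
  have "limsup (\<lambda>n. ereal (fekete_V {} n powr (2 / (real n * (real n - 1))))) = limsup (\<lambda>n. ereal 0)"
    by (rule Limsup_eq[OF ev])
  also have "\<dots> = ereal 0" by (rule Limsup_const) simp
  finally show ?thesis unfolding transfinite_diameter_def by simp
qed

lemma delta_empty:
  assumes a: "0 < a" and b: "0 < b"
  shows "delta_C (triangle a b) {} = 0"
proof -
  have V0: "Vn (triangle a b) {} n = 0" for n
  proof -
    have "(0, 0) \<in> exps (triangle a b) n" unfolding exps_tri[OF a b] tri_def using a b by simp
    hence S: "{cmod (det_on (exps (triangle a b) n) (\<lambda>I J. mono2 I (\<zeta> J))) | \<zeta>. \<forall>J\<in>exps (triangle a b) n. \<zeta> J \<in> {}} = {}"
      by blast
    show ?thesis unfolding Vn_def S by simp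
  qed
  have "limsup (\<lambda>n. ereal (Vn (triangle a b) {} n powr (1 / real (ln_sum (triangle a b) n)))) = limsup (\<lambda>n. ereal 0)"
    unfolding V0 by simp
  also have "\<dots> = ereal 0" by (rule Limsup_const) simp
  finally show ?thesis unfolding delta_C_def by simp
qed

theorem theorem4p1:
  fixes E F :: "complex set" and a b :: real
  assumes "compact E" and "compact F" and "a > 0" and "b > 0"
  shows "delta_C (triangle a b) (E \<times> F) =
           transfinite_diameter E powr (b / (a + b)) * transfinite_diameter F powr (a / (a + b))"
proof (cases "E = {} \<or> F = {}")
  case False
  then interpret two E F a b by unfold_locales (use assms in auto)
  show ?thesis using main unfolding E.TD_def F.TD_def \<alpha>_def \<beta>_def .
next
  case True
  hence EF: "E \<times> F = {}" by auto
  have L: "delta_C (triangle a b) (E \<times> F) = 0" unfolding EF using delta_empty assms by simp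
  show ?thesis using True L TD_empty by auto
qed


end
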